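(* Let $\mathcal{V}$ be a locally small symmetric monoidal closed category that is finitely well-complete. Then $\underline{\mathcal{V}}$ is $\mathcal{V}$-finitely-well-complete, and $(\mathrm{Epi}_{\mathcal{V}}\underline{\mathcal{V}},\mathrm{StrMono}_{\mathcal{V}}\underline{\mathcal{V}})=(\mathrm{Epi}\,\mathcal{V},\mathrm{StrMono}\,\mathcal{V})$ is a $\mathcal{V}$-proper $\mathcal{V}$-factorization-system on $\underline{\mathcal{V}}$.
   Context: $\underline{\mathcal{V}}$ is the self-enrichment of $\mathcal{V}$. For a $\mathcal{V}$-category $\mathbf{A}$: $\mathcal{V}$-monos are $m$ with all $\mathbf{A}(A,m)$ mono in $\mathcal{V}$; $\mathcal{V}$-epis are $\mathcal{V}$-monos in $\mathbf{A}^{\mathrm{op}}$; $e\downarrow_{\mathcal{V}}m$ ($e:A_1\to A_2$, $m:B_1\to B_2$) means the square with sides $\mathbf{A}(A_2,m)$, $\mathbf{A}(e,B_1)$, $\mathbf{A}(e,B_2)$, $\mathbf{A}(A_1,m)$ is a pullback in $\mathcal{V}$; $\mathcal{E}^{\downarrow_{\mathcal{V}}}$, $\mathcal{M}^{\uparrow_{\mathcal{V}}}$ are the corresponding right/left orthogonal classes; $\mathrm{StrMono}_{\mathcal{V}}\mathbf{A}=(\mathrm{Epi}_{\mathcal{V}}\mathbf{A})^{\downarrow_{\mathcal{V}}}\cap\mathrm{Mono}_{\mathcal{V}}\mathbf{A}$. A $\mathcal{V}$-factorization-system is $(\mathcal{E},\mathcal{M})$ with $\mathcal{E}^{\downarrow_{\mathcal{V}}}=\mathcal{M}$,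 $\mathcal{M}^{\uparrow_{\mathcal{V}}}=\mathcal{E}$ and $(\mathcal{E},\mathcal{M})$-factorizations; it is $\mathcal{V}$-proper if $\mathcal{E}\subseteq\mathrm{Epi}_{\mathcal{V}}$ and $\mathcal{M}\subseteq\mathrm{Mono}_{\mathcal{V}}$. A $\mathcal{V}$-limit is an ordinary limit preserved by all $\mathbf{A}(A,-)$. $\mathbf{A}$ is $\mathcal{V}$-finitely-well-complete if it has all finite $\mathcal{V}$-limits and every (class-indexed) family of $\mathcal{V}$-strong-monos with common codomain has a $\mathcal{V}$-fiber-product that is again a $\mathcal{V}$-strong-mono. An ordinary category is finitely well-complete if it has finite limits and every (class-indexed) family of strong monomorphisms with common codomain has a fiber product (the case $\mathcal{V}=\mathbf{Set}$). *)

theory Defs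
  imports Main
begin

record ('o,'m) cat =
  obj   :: "'o set"
  arr   :: "'m set"
  cdom  :: "'m \<Rightarrow> 'o"
  ccod  :: "'m \<Rightarrow> 'o"
  cid   :: "'o \<Rightarrow> 'm"
  ccomp :: "'m \<Rightarrow> 'm \<Rightarrow> 'm"   (* ccomp C g f  =  g o f *)

definition hom :: "('o,'m,'z) cat_scheme \<Rightarrow> 'o \<Rightarrow> 'o \<Rightarrow> 'm set" where
  "hom C A B = {f \<in> arr C. cdom C f = A \<and> ccod C f = B}"

definition category :: "('o,'m,'z) cat_scheme \<Rightarrow> bool" where
  "category C \<longleftrightarrow>
     (\<forall>f\<in>arr C. cdom C f \<in> obj C \<and> ccod C f \<in> obj C) \<and>
     (\<forall>A\<in>obj C. cid C A \<in> hom C A A) \<and>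
     (\<forall>f\<in>arr C. \<forall>g\<in>arr C. ccod C f = cdom C g \<longrightarrow>
         ccomp C g f \<in> hom C (cdom C f) (ccod C g)) \<and>
     (\<forall>f\<in>arr C. ccomp C f (cid C (cdom C f)) = f \<and> ccomp C (cid C (ccod C f)) f = f) \<and>
     (\<forall>f\<in>arr C. \<forall>g\<in>arr C. \<forall>h\<in>arr C. ccod C f = cdom C g \<and> ccod C g = cdom C h \<longrightarrow>
         ccomp C h (ccomp C g f) = ccomp C (ccomp C h g) f)"

definition iso :: "('o,'m,'z) cat_scheme \<Rightarrow> 'm \<Rightarrow> bool" where
  "iso C f \<longleftrightarrow> f \<in> arr C \<and> (\<exists>g\<in>hom C (ccod C f) (cdom C f).
      ccomp C g f = cid C (cdom C f) \<and> ccomp C f g = cid C (ccod C f))"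

definition mono :: "('o,'m,'z) cat_scheme \<Rightarrow> 'm \<Rightarrow> bool" where
  "mono C m \<longleftrightarrow> m \<in> arr C \<and>
     (\<forall>g\<in>arr C. \<forall>h\<in>arr C. ccod C g = cdom C m \<and> ccod C h = cdom C m \<and> cdom C g = cdom C h \<and>
        ccomp C m g = ccomp C m h \<longrightarrow> g = h)"

definition epi :: "('o,'m,'z) cat_scheme \<Rightarrow> 'm \<Rightarrow> bool" where
  "epi C e \<longleftrightarrow> e \<in> arr C \<and>
     (\<forall>g\<in>arr C. \<forall>h\<in>arr C. cdom C g = ccod C e \<and> cdom C h = ccod C e \<and> ccod C g = ccod C h \<and>
        ccomp C g e = ccomp C h e \<longrightarrow> g = h)"

definition orth :: "('o,'m,'z) cat_scheme \<Rightarrow> 'm \<Rightarrow> 'm \<Rightarrow> bool" where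
  "orth C e m \<longleftrightarrow> e \<in> arr C \<and> m \<in> arr C \<and>
     (\<forall>u\<in>hom C (cdom C e) (cdom C m). \<forall>v\<in>hom C (ccod C e) (ccod C m).
        ccomp C m u = ccomp C v e \<longrightarrow>
        (\<exists>!d. d \<in> hom C (ccod C e) (cdom C m) \<and> ccomp C d e = u \<and> ccomp C m d = v))"

definition Epis :: "('o,'m,'z) cat_scheme \<Rightarrow> 'm set" where
  "Epis C = {e. epi C e}"

definition Monos :: "('o,'m,'z) cat_scheme \<Rightarrow> 'm set" where
  "Monos C = {m. mono C m}"

definition StrMonos :: "('o,'m,'z) cat_scheme \<Rightarrow> 'm set" where
  "StrMonos C = {m. mono C m \<and> (\<forall>e. epi C e \<longrightarrow> orth C e m)}"

definition is_pullback :: "('o,'m,'z) cat_scheme \<Rightarrow> 'm \<Rightarrow> 'm \<Rightarrow> 'm \<Rightarrow> 'm \<Rightarrow> bool" where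
  "is_pullback C p1 p2 f g \<longleftrightarrow>
     f \<in> arr C \<and> g \<in> arr C \<and> ccod C f = ccod C g \<and>
     p1 \<in> hom C (cdom C p1) (cdom C f) \<and> p2 \<in> hom C (cdom C p1) (cdom C g) \<and>
     ccomp C f p1 = ccomp C g p2 \<and>
     (\<forall>X\<in>obj C. \<forall>x1\<in>hom C X (cdom C f). \<forall>x2\<in>hom C X (cdom C g).
        ccomp C f x1 = ccomp C g x2 \<longrightarrow>
        (\<exists>!u. u \<in> hom C X (cdom C p1) \<and> ccomp C p1 u = x1 \<and> ccomp C p2 u = x2))"

definition wide_pullback ::
  "('o,'m,'z) cat_scheme \<Rightarrow> 'i set \<Rightarrow> ('i \<Rightarrow> 'm) \<Rightarrow> 'o \<Rightarrow> 'o \<Rightarrow> 'm \<Rightarrow> ('i \<Rightarrow> 'm) \<Rightarrow> bool" where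
  "wide_pullback C I f B P q p \<longleftrightarrow>
     B \<in> obj C \<and> P \<in> obj C \<and> q \<in> hom C P B \<and>
     (\<forall>i\<in>I. f i \<in> hom C (cdom C (f i)) B \<and> p i \<in> hom C P (cdom C (f i)) \<and> ccomp C (f i) (p i) = q) \<and>
     (\<forall>X\<in>obj C. \<forall>y\<in>hom C X B. \<forall>x.
        (\<forall>i\<in>I. x i \<in> hom C X (cdom C (f i)) \<and> ccomp C (f i) (x i) = y) \<longrightarrow>
        (\<exists>!u. u \<in> hom C X P \<and> ccomp C q u = y \<and> (\<forall>i\<in>I. ccomp C (p i) u = x i)))"

definition is_functor ::
  "('a,'b,'y) cat_scheme \<Rightarrow> ('o,'m,'z) cat_scheme \<Rightarrow> ('a \<Rightarrow> 'o) \<Rightarrow> ('b \<Rightarrow> 'm) \<Rightarrow> bool" where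
  "is_functor J C Fo Fa \<longleftrightarrow>
     (\<forall>j\<in>obj J. Fo j \<in> obj C) \<and>
     (\<forall>u\<in>arr J. Fa u \<in> hom C (Fo (cdom J u)) (Fo (ccod J u))) \<and>
     (\<forall>j\<in>obj J. Fa (cid J j) = cid C (Fo j)) \<and>
     (\<forall>u\<in>arr J. \<forall>v\<in>arr J. ccod J u = cdom J v \<longrightarrow> Fa (ccomp J v u) = ccomp C (Fa v) (Fa u))"

definition is_cone ::
  "('a,'b,'y) cat_scheme \<Rightarrow> ('o,'m,'z) cat_scheme \<Rightarrow> ('a \<Rightarrow> 'o) \<Rightarrow> ('b \<Rightarrow> 'm) \<Rightarrow> 'o \<Rightarrow> ('a \<Rightarrow> 'm) \<Rightarrow> bool" where
  "is_cone J C Do Da L l \<longleftrightarrow> L \<in> obj C \<and>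
     (\<forall>j\<in>obj J. l j \<in> hom C L (Do j)) \<and>
     (\<forall>u\<in>arr J. ccomp C (Da u) (l (cdom J u)) = l (ccod J u))"

definition is_limit ::
  "('a,'b,'y) cat_scheme \<Rightarrow> ('o,'m,'z) cat_scheme \<Rightarrow> ('a \<Rightarrow> 'o) \<Rightarrow> ('b \<Rightarrow> 'm) \<Rightarrow> 'o \<Rightarrow> ('a \<Rightarrow> 'm) \<Rightarrow> bool" where
  "is_limit J C Do Da L l \<longleftrightarrow> is_cone J C Do Da L l \<and>
     (\<forall>X x. is_cone J C Do Da X x \<longrightarrow>
        (\<exists>!u. u \<in> hom C X L \<and> (\<forall>j\<in>obj J. ccomp C (l j) u = x j)))"

text \<open>Finite shapes: finite categories (represented, up to isomorphism, on \<open>nat\<close>).\<close>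
definition finite_shape :: "(nat,nat) cat \<Rightarrow> bool" where
  "finite_shape J \<longleftrightarrow> category J \<and> finite (obj J) \<and> finite (arr J)"

definition has_finite_limits :: "('o,'m,'z) cat_scheme \<Rightarrow> bool" where
  "has_finite_limits C \<longleftrightarrow>
     (\<forall>J Do Da. finite_shape J \<and> is_functor J C Do Da \<longrightarrow> (\<exists>L l. is_limit J C Do Da L l))"

definition finitely_well_complete :: "('o,'m,'z) cat_scheme \<Rightarrow> bool" where
  "finitely_well_complete C \<longleftrightarrow> has_finite_limits C \<and>
     (\<forall>S B. B \<in> obj C \<and> S \<subseteq> StrMonos C \<and> (\<forall>s\<in>S. ccod C s = B) \<longrightarrow>
        (\<exists>P q p. wide_pullback C S (\<lambda>s. s) B P q p \<and> q \<in> StrMonos C))"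

record ('o,'m) smcc = "('o,'m) cat" +
  tens   :: "'o \<Rightarrow> 'o \<Rightarrow> 'o"
  tensm  :: "'m \<Rightarrow> 'm \<Rightarrow> 'm"
  tunit  :: "'o"
  alpha  :: "'o \<Rightarrow> 'o \<Rightarrow> 'o \<Rightarrow> 'm"   (* (A\<otimes>B)\<otimes>C \<rightarrow> A\<otimes>(B\<otimes>C) *)
  lam    :: "'o \<Rightarrow> 'm"                (* I\<otimes>A \<rightarrow> A *)
  rho    :: "'o \<Rightarrow> 'm"                (* A\<otimes>I \<rightarrow> A *)
  sigma  :: "'o \<Rightarrow> 'o \<Rightarrow> 'm"          (* A\<otimes>B \<rightarrow> B\<otimes>A *)
  ihom   :: "'o \<Rightarrow> 'o \<Rightarrow> 'o"
  ev     :: "'o \<Rightarrow> 'o \<Rightarrow> 'm"          (* [A,B]\<otimes>A \<rightarrow> B *)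

definition symmetric_monoidal_closed :: "('o,'m,'z) smcc_scheme \<Rightarrow> bool" where
  "symmetric_monoidal_closed V \<longleftrightarrow> category V \<and>
     \<comment> \<open>tensor is a bifunctor\<close>
     (\<forall>A\<in>obj V. \<forall>B\<in>obj V. tens V A B \<in> obj V) \<and>
     (\<forall>f\<in>arr V. \<forall>g\<in>arr V. tensm V f g \<in>
        hom V (tens V (cdom V f) (cdom V g)) (tens V (ccod V f) (ccod V g))) \<and>
     (\<forall>A\<in>obj V. \<forall>B\<in>obj V. tensm V (cid V A) (cid V B) = cid V (tens V A B)) \<and>
     (\<forall>f\<in>arr V. \<forall>g\<in>arr V. \<forall>f'\<in>arr V. \<forall>g'\<in>arr V.
        ccod V f = cdom V g \<and> ccod V f' = cdom V g' \<longrightarrow>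
        tensm V (ccomp V g f) (ccomp V g' f') = ccomp V (tensm V g g') (tensm V f f')) \<and>
     tunit V \<in> obj V \<and>
     \<comment> \<open>associator, unitors, symmetry: natural isomorphisms\<close>
     (\<forall>A\<in>obj V. \<forall>B\<in>obj V. \<forall>C\<in>obj V.
        alpha V A B C \<in> hom V (tens V (tens V A B) C) (tens V A (tens V B C)) \<and> iso V (alpha V A B C)) \<and>
     (\<forall>f\<in>arr V. \<forall>g\<in>arr V. \<forall>h\<in>arr V.
        ccomp V (alpha V (ccod V f) (ccod V g) (ccod V h)) (tensm V (tensm V f g) h) =
        ccomp V (tensm V f (tensm V g h)) (alpha V (cdom V f) (cdom V g) (cdom V h))) \<and>
     (\<forall>A\<in>obj V. lam V A \<in> hom V (tens V (tunit V) A) A \<and> iso V (lam V A)) \<and>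
     (\<forall>f\<in>arr V. ccomp V (lam V (ccod V f)) (tensm V (cid V (tunit V)) f) = ccomp V f (lam V (cdom V f))) \<and>
     (\<forall>A\<in>obj V. rho V A \<in> hom V (tens V A (tunit V)) A \<and> iso V (rho V A)) \<and>
     (\<forall>f\<in>arr V. ccomp V (rho V (ccod V f)) (tensm V f (cid V (tunit V))) = ccomp V f (rho V (cdom V f))) \<and>
     (\<forall>A\<in>obj V. \<forall>B\<in>obj V. sigma V A B \<in> hom V (tens V A B) (tens V B A) \<and>
        ccomp V (sigma V B A) (sigma V A B) = cid V (tens V A B)) \<and>
     (\<forall>f\<in>arr V. \<forall>g\<in>arr V.
        ccomp V (sigma V (ccod V f) (ccod V g)) (tensm V f g) =
        ccomp V (tensm V g f) (sigma V (cdom V f) (cdom V g))) \<and>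
     \<comment> \<open>pentagon\<close>
     (\<forall>A\<in>obj V. \<forall>B\<in>obj V. \<forall>C\<in>obj V. \<forall>D\<in>obj V.
        ccomp V (alpha V A B (tens V C D)) (alpha V (tens V A B) C D) =
        ccomp V (tensm V (cid V A) (alpha V B C D))
          (ccomp V (alpha V A (tens V B C) D) (tensm V (alpha V A B C) (cid V D)))) \<and>
     \<comment> \<open>triangle\<close>
     (\<forall>A\<in>obj V. \<forall>B\<in>obj V.
        ccomp V (tensm V (cid V A) (lam V B)) (alpha V A (tunit V) B) = tensm V (rho V A) (cid V B)) \<and>
     \<comment> \<open>hexagon\<close>
     (\<forall>A\<in>obj V. \<forall>B\<in>obj V. \<forall>C\<in>obj V.
        ccomp V (alpha V B C A) (ccomp V (sigma V A (tens V B C)) (alpha V A B C)) =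
        ccomp V (tensm V (cid V B) (sigma V A C))
          (ccomp V (alpha V B A C) (tensm V (sigma V A B) (cid V C)))) \<and>
     \<comment> \<open>closedness: \<open>- \<otimes> A\<close> has right adjoint \<open>[A,-]\<close> with counit \<open>ev\<close>\<close>
     (\<forall>A\<in>obj V. \<forall>B\<in>obj V. ihom V A B \<in> obj V \<and>
        ev V A B \<in> hom V (tens V (ihom V A B) A) B \<and>
        (\<forall>X\<in>obj V. \<forall>f\<in>hom V (tens V X A) B.
           \<exists>!g. g \<in> hom V X (ihom V A B) \<and> ccomp V (ev V A B) (tensm V g (cid V A)) = f))"

text \<open>These are the
  hom-actions \<open>\<underline>V(A,m)\<close> and \<open>\<underline>V(e,B)\<close> of the self-enrichment \<open>\<underline>V\<close>.\<close>
definition ihom_r :: "('o,'m,'z) smcc_scheme \<Rightarrow> 'o \<Rightarrow> 'm \<Rightarrow> 'm" where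
  "ihom_r V A m = (THE g. g \<in> hom V (ihom V A (cdom V m)) (ihom V A (ccod V m)) \<and>
      ccomp V (ev V A (ccod V m)) (tensm V g (cid V A)) = ccomp V m (ev V A (cdom V m)))"

definition ihom_l :: "('o,'m,'z) smcc_scheme \<Rightarrow> 'm \<Rightarrow> 'o \<Rightarrow> 'm" where
  "ihom_l V e B = (THE g. g \<in> hom V (ihom V (ccod V e) B) (ihom V (cdom V e) B) \<and>
      ccomp V (ev V (cdom V e) B) (tensm V g (cid V (cdom V e))) =
      ccomp V (ev V (ccod V e) B) (tensm V (cid V (ihom V (ccod V e) B)) e))"

definition VMonos :: "('o,'m,'z) smcc_scheme \<Rightarrow> 'm set" where
  "VMonos V = {m \<in> arr V. \<forall>A\<in>obj V. mono V (ihom_r V A m)}"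

definition VEpis :: "('o,'m,'z) smcc_scheme \<Rightarrow> 'm set" where
  "VEpis V = {e \<in> arr V. \<forall>B\<in>obj V. mono V (ihom_l V e B)}"

definition Vorth :: "('o,'m,'z) smcc_scheme \<Rightarrow> 'm \<Rightarrow> 'm \<Rightarrow> bool" where
  "Vorth V e m \<longleftrightarrow> e \<in> arr V \<and> m \<in> arr V \<and>
     is_pullback V (ihom_r V (ccod V e) m) (ihom_l V e (cdom V m))
                   (ihom_l V e (ccod V m)) (ihom_r V (cdom V e) m)"

definition Vright :: "('o,'m,'z) smcc_scheme \<Rightarrow> 'm set \<Rightarrow> 'm set" where
  "Vright V E = {m \<in> arr V. \<forall>e\<in>E. Vorth V e m}"

definition Vleft :: "('o,'m,'z) smcc_scheme \<Rightarrow> 'm set \<Rightarrow> 'm set" where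
  "Vleft V M = {e \<in> arr V. \<forall>m\<in>M. Vorth V e m}"

definition VStrMonos :: "('o,'m,'z) smcc_scheme \<Rightarrow> 'm set" where
  "VStrMonos V = Vright V (VEpis V) \<inter> VMonos V"

definition V_factorization_system :: "('o,'m,'z) smcc_scheme \<Rightarrow> 'm set \<Rightarrow> 'm set \<Rightarrow> bool" where
  "V_factorization_system V E M \<longleftrightarrow> Vright V E = M \<and> Vleft V M = E \<and>
     (\<forall>f\<in>arr V. \<exists>e\<in>E. \<exists>m\<in>M. ccod V e = cdom V m \<and> f = ccomp V m e)"

definition V_proper :: "('o,'m,'z) smcc_scheme \<Rightarrow> 'm set \<Rightarrow> 'm set \<Rightarrow> bool" where
  "V_proper V E M \<longleftrightarrow> E \<subseteq> VEpis V \<and> M \<subseteq> VMonos V"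

definition is_Vlimit ::
  "('a,'b,'y) cat_scheme \<Rightarrow> ('o,'m,'z) smcc_scheme \<Rightarrow> ('a \<Rightarrow> 'o) \<Rightarrow> ('b \<Rightarrow> 'm) \<Rightarrow> 'o \<Rightarrow> ('a \<Rightarrow> 'm) \<Rightarrow> bool" where
  "is_Vlimit J V Do Da L l \<longleftrightarrow> is_limit J V Do Da L l \<and>
     (\<forall>A\<in>obj V. is_limit J V (\<lambda>j. ihom V A (Do j)) (\<lambda>u. ihom_r V A (Da u))
                             (ihom V A L) (\<lambda>j. ihom_r V A (l j)))"

definition has_finite_Vlimits :: "('o,'m,'z) smcc_scheme \<Rightarrow> bool" where
  "has_finite_Vlimits V \<longleftrightarrow>
     (\<forall>J Do Da. finite_shape J \<and> is_functor J V Do Da \<longrightarrow> (\<exists>L l. is_Vlimit J V Do Da L l))"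

definition is_Vwide_pullback ::
  "('o,'m,'z) smcc_scheme \<Rightarrow> 'i set \<Rightarrow> ('i \<Rightarrow> 'm) \<Rightarrow> 'o \<Rightarrow> 'o \<Rightarrow> 'm \<Rightarrow> ('i \<Rightarrow> 'm) \<Rightarrow> bool" where
  "is_Vwide_pullback V I f B P q p \<longleftrightarrow> wide_pullback V I f B P q p \<and>
     (\<forall>A\<in>obj V. wide_pullback V I (\<lambda>i. ihom_r V A (f i)) (ihom V A B) (ihom V A P)
                  (ihom_r V A q) (\<lambda>i. ihom_r V A (p i)))"

definition Vfinitely_well_complete :: "('o,'m,'z) smcc_scheme \<Rightarrow> bool" where
  "Vfinitely_well_complete V \<longleftrightarrow> has_finite_Vlimits V \<and>
     (\<forall>S B. B \<in> obj V \<and> S \<subseteq> VStrMonos V \<and> (\<forall>s\<in>S. ccod V s = B) \<longrightarrow>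
        (\<exists>P q p. is_Vwide_pullback V S (\<lambda>s. s) B P q p \<and> q \<in> VStrMonos V))"

end

theory Submission
  imports Defs
begin


locale smc =
  fixes V :: "('o,'m,'z) smcc_scheme"
  assumes smc: "symmetric_monoidal_closed V"
begin

abbreviation cmp (infixr "\<cdot>" 55) where "g \<cdot> f \<equiv> ccomp V g f"

lemma cat: "category V" using smc unfolding symmetric_monoidal_closed_def by (elim conjE) assumption

lemma S0: "category V"
  using smc unfolding symmetric_monoidal_closed_def by (elim conjE) assumption

lemma S1: "\<forall>A\<in>obj V. \<forall>B\<in>obj V. tens V A B \<in> obj V"
  using smc unfolding symmetric_monoidal_closed_def by (elim conjE) assumption

lemma S2: "\<forall>f\<in>arr V. \<forall>g\<in>arr V. tensm V f g \<in> hom V (tens V (cdom V f) (cdom V g)) (tens V (ccod V f) (ccod V g))"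
  using smc unfolding symmetric_monoidal_closed_def by (elim conjE) assumption

lemma S3: "\<forall>A\<in>obj V. \<forall>B\<in>obj V. tensm V (cid V A) (cid V B) = cid V (tens V A B)"
  using smc unfolding symmetric_monoidal_closed_def by (elim conjE) assumption

lemma S4: "\<forall>f\<in>arr V. \<forall>g\<in>arr V. \<forall>f'\<in>arr V. \<forall>g'\<in>arr V. ccod V f = cdom V g \<and> ccod V f' = cdom V g' \<longrightarrow> tensm V (ccomp V g f) (ccomp V g' f') = ccomp V (tensm V g g') (tensm V f f')"
  using smc unfolding symmetric_monoidal_closed_def by (elim conjE) assumption

lemma S5: "tunit V \<in> obj V"
  using smc unfolding symmetric_monoidal_closed_def by (elim conjE) assumption

lemma S6: "\<forall>A\<in>obj V. \<forall>B\<in>obj V. \<forall>C\<in>obj V. alpha V A B C \<in> hom V (tens V (tens V A B) C) (tens V A (tens V B C)) \<and> iso V (alpha V A B C)"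
  using smc unfolding symmetric_monoidal_closed_def by (elim conjE) assumption

lemma S7: "\<forall>f\<in>arr V. \<forall>g\<in>arr V. \<forall>h\<in>arr V. ccomp V (alpha V (ccod V f) (ccod V g) (ccod V h)) (tensm V (tensm V f g) h) = ccomp V (tensm V f (tensm V g h)) (alpha V (cdom V f) (cdom V g) (cdom V h))"
  using smc unfolding symmetric_monoidal_closed_def by (elim conjE) assumption

lemma S8: "\<forall>A\<in>obj V. lam V A \<in> hom V (tens V (tunit V) A) A \<and> iso V (lam V A)"
  using smc unfolding symmetric_monoidal_closed_def by (elim conjE) assumption

lemma S9: "\<forall>f\<in>arr V. ccomp V (lam V (ccod V f)) (tensm V (cid V (tunit V)) f) = ccomp V f (lam V (cdom V f))"
  using smc unfolding symmetric_monoidal_closed_def by (elim conjE) assumption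

lemma S10: "\<forall>A\<in>obj V. rho V A \<in> hom V (tens V A (tunit V)) A \<and> iso V (rho V A)"
  using smc unfolding symmetric_monoidal_closed_def by (elim conjE) assumption

lemma S11: "\<forall>f\<in>arr V. ccomp V (rho V (ccod V f)) (tensm V f (cid V (tunit V))) = ccomp V f (rho V (cdom V f))"
  using smc unfolding symmetric_monoidal_closed_def by (elim conjE) assumption

lemma S12: "\<forall>A\<in>obj V. \<forall>B\<in>obj V. sigma V A B \<in> hom V (tens V A B) (tens V B A) \<and> ccomp V (sigma V B A) (sigma V A B) = cid V (tens V A B)"
  using smc unfolding symmetric_monoidal_closed_def by (elim conjE) assumption

lemma S13: "\<forall>f\<in>arr V. \<forall>g\<in>arr V. ccomp V (sigma V (ccod V f) (ccod V g)) (tensm V f g) = ccomp V (tensm V g f) (sigma V (cdom V f) (cdom V g))"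
  using smc unfolding symmetric_monoidal_closed_def by (elim conjE) assumption

lemma S14: "\<forall>A\<in>obj V. \<forall>B\<in>obj V. \<forall>C\<in>obj V. \<forall>D\<in>obj V. ccomp V (alpha V A B (tens V C D)) (alpha V (tens V A B) C D) = ccomp V (tensm V (cid V A) (alpha V B C D)) (ccomp V (alpha V A (tens V B C) D) (tensm V (alpha V A B C) (cid V D)))"
  using smc unfolding symmetric_monoidal_closed_def by (elim conjE) assumption

lemma S15: "\<forall>A\<in>obj V. \<forall>B\<in>obj V. ccomp V (tensm V (cid V A) (lam V B)) (alpha V A (tunit V) B) = tensm V (rho V A) (cid V B)"
  using smc unfolding symmetric_monoidal_closed_def by (elim conjE) assumption

lemma S16: "\<forall>A\<in>obj V. \<forall>B\<in>obj V. \<forall>C\<in>obj V. ccomp V (alpha V B C A) (ccomp V (sigma V A (tens V B C)) (alpha V A B C)) = ccomp V (tensm V (cid V B) (sigma V A C)) (ccomp V (alpha V B A C) (tensm V (sigma V A B) (cid V C)))"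
  using smc unfolding symmetric_monoidal_closed_def by (elim conjE) assumption

lemma S17: "\<forall>A\<in>obj V. \<forall>B\<in>obj V. ihom V A B \<in> obj V \<and> ev V A B \<in> hom V (tens V (ihom V A B) A) B \<and> (\<forall>X\<in>obj V. \<forall>f\<in>hom V (tens V X A) B. \<exists>!g. g \<in> hom V X (ihom V A B) \<and> ccomp V (ev V A B) (tensm V g (cid V A)) = f)"
  using smc unfolding symmetric_monoidal_closed_def by (elim conjE) assumption

lemma C0: "\<forall>f\<in>arr V. cdom V f \<in> obj V \<and> ccod V f \<in> obj V"
  using cat unfolding category_def by (elim conjE) assumption

lemma C1: "\<forall>A\<in>obj V. cid V A \<in> hom V A A"
  using cat unfolding category_def by (elim conjE) assumption

lemma C2: "\<forall>f\<in>arr V. \<forall>g\<in>arr V. ccod V f = cdom V g \<longrightarrow> ccomp V g f \<in> hom V (cdom V f) (ccod V g)"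
  using cat unfolding category_def by (elim conjE) assumption

lemma C3: "\<forall>f\<in>arr V. ccomp V f (cid V (cdom V f)) = f \<and> ccomp V (cid V (ccod V f)) f = f"
  using cat unfolding category_def by (elim conjE) assumption

lemma C4: "\<forall>f\<in>arr V. \<forall>g\<in>arr V. \<forall>h\<in>arr V. ccod V f = cdom V g \<and> ccod V g = cdom V h \<longrightarrow> ccomp V h (ccomp V g f) = ccomp V (ccomp V h g) f"
  using cat unfolding category_def by (elim conjE) assumption

lemma hom_arr: "f \<in> hom V A B \<Longrightarrow> f \<in> arr V" by (simp add: hom_def)
lemma hom_dom: "f \<in> hom V A B \<Longrightarrow> cdom V f = A" by (simp add: hom_def)
lemma hom_cod: "f \<in> hom V A B \<Longrightarrow> ccod V f = B" by (simp add: hom_def)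
lemma homI: "f \<in> arr V \<Longrightarrow> f \<in> hom V (cdom V f) (ccod V f)" by (simp add: hom_def)
lemma homI': "f \<in> arr V \<Longrightarrow> cdom V f = A \<Longrightarrow> ccod V f = B \<Longrightarrow> f \<in> hom V A B" by (simp add: hom_def)
lemma arr_obj: "f \<in> arr V \<Longrightarrow> cdom V f \<in> obj V \<and> ccod V f \<in> obj V"
  using C0 by blast
lemma hom_obj1: "f \<in> hom V A B \<Longrightarrow> A \<in> obj V"
  using arr_obj hom_arr hom_dom by metis
lemma hom_obj2: "f \<in> hom V A B \<Longrightarrow> B \<in> obj V"
  using arr_obj hom_arr hom_cod by metis
lemma id_hom[intro]: "A \<in> obj V \<Longrightarrow> cid V A \<in> hom V A A"
  using C1 by blast
lemma comp_hom[intro]: "f \<in> hom V A B \<Longrightarrow> g \<in> hom V B C \<Longrightarrow> g \<cdot> f \<in> hom V A C"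
proof -
  assume a: "f \<in> hom V A B" "g \<in> hom V B C"
  have "g \<cdot> f \<in> hom V (cdom V f) (ccod V g)"
    using C2[rule_format, OF hom_arr[OF a(1)] hom_arr[OF a(2)]] a by (simp add: hom_def)
  thus ?thesis using a by (simp add: hom_def)
qed
lemma comp_id_r[simp]: "f \<in> hom V A B \<Longrightarrow> f \<cdot> cid V A = f"
proof -
  assume a: "f \<in> hom V A B"
  from C3[rule_format, OF hom_arr[OF a]] a show ?thesis by (simp add: hom_def)
qed
lemma comp_id_l[simp]: "f \<in> hom V A B \<Longrightarrow> cid V B \<cdot> f = f"
proof -
  assume a: "f \<in> hom V A B"
  from C3[rule_format, OF hom_arr[OF a]] a show ?thesis by (simp add: hom_def)
qed
lemma assoc: "f \<in> hom V A B \<Longrightarrow> g \<in> hom V B C \<Longrightarrow> h \<in> hom V C D \<Longrightarrow> h \<cdot> (g \<cdot> f) = (h \<cdot> g) \<cdot> f"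
proof -
  assume a: "f \<in> hom V A B" "g \<in> hom V B C" "h \<in> hom V C D"
  show ?thesis using C4[rule_format, OF hom_arr[OF a(1)] hom_arr[OF a(2)] hom_arr[OF a(3)]] a by (simp add: hom_def)
qed

lemma tens_obj[intro]: "A \<in> obj V \<Longrightarrow> B \<in> obj V \<Longrightarrow> tens V A B \<in> obj V"
  using S1 by blast
lemma tensm_hom[intro]: "f \<in> hom V A B \<Longrightarrow> g \<in> hom V C D \<Longrightarrow> tensm V f g \<in> hom V (tens V A C) (tens V B D)"
proof -
  assume a: "f \<in> hom V A B" "g \<in> hom V C D"
  show ?thesis using S2[rule_format, OF hom_arr[OF a(1)] hom_arr[OF a(2)]] a by (simp add: hom_def)
qed
lemma tensm_id: "A \<in> obj V \<Longrightarrow> B \<in> obj V \<Longrightarrow> tensm V (cid V A) (cid V B) = cid V (tens V A B)"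
  using S3 by blast
lemma tensm_comp: "f \<in> hom V A B \<Longrightarrow> g \<in> hom V B C \<Longrightarrow> f' \<in> hom V A' B' \<Longrightarrow> g' \<in> hom V B' C' \<Longrightarrow>
   tensm V (g \<cdot> f) (g' \<cdot> f') = tensm V g g' \<cdot> tensm V f f'"
proof -
  assume a: "f \<in> hom V A B" "g \<in> hom V B C" "f' \<in> hom V A' B'" "g' \<in> hom V B' C'"
  have "ccod V f = cdom V g \<and> ccod V f' = cdom V g'" using a by (simp add: hom_def)
  thus ?thesis using S4[rule_format, OF hom_arr[OF a(1)] hom_arr[OF a(2)] hom_arr[OF a(3)] hom_arr[OF a(4)]] by blast
qed
lemma unit_obj[intro]: "tunit V \<in> obj V"
  using S5 .
lemma lam_hom[intro]: "A \<in> obj V \<Longrightarrow> lam V A \<in> hom V (tens V (tunit V) A) A"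
  using S8 by blast
lemma lam_iso: "A \<in> obj V \<Longrightarrow> iso V (lam V A)"
  using S8 by blast
lemma lam_nat: "f \<in> hom V A B \<Longrightarrow> lam V B \<cdot> tensm V (cid V (tunit V)) f = f \<cdot> lam V A"
proof -
  assume a: "f \<in> hom V A B"
  show ?thesis using S9[rule_format, OF hom_arr[OF a]] a by (simp add: hom_def)
qed
lemma sigma_hom[intro]: "A \<in> obj V \<Longrightarrow> B \<in> obj V \<Longrightarrow> sigma V A B \<in> hom V (tens V A B) (tens V B A)"
  using S12 by blast
lemma sigma_inv: "A \<in> obj V \<Longrightarrow> B \<in> obj V \<Longrightarrow> sigma V B A \<cdot> sigma V A B = cid V (tens V A B)"
  using S12 by blast
lemma sigma_nat: "f \<in> hom V A B \<Longrightarrow> g \<in> hom V C D \<Longrightarrow>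
   sigma V B D \<cdot> tensm V f g = tensm V g f \<cdot> sigma V A C"
proof -
  assume a: "f \<in> hom V A B" "g \<in> hom V C D"
  show ?thesis using S13[rule_format, OF hom_arr[OF a(1)] hom_arr[OF a(2)]] a by (simp add: hom_def)
qed
lemma ihom_obj[intro]: "A \<in> obj V \<Longrightarrow> B \<in> obj V \<Longrightarrow> ihom V A B \<in> obj V" using S17 by blast
lemma ev_hom[intro]: "A \<in> obj V \<Longrightarrow> B \<in> obj V \<Longrightarrow> ev V A B \<in> hom V (tens V (ihom V A B) A) B"
  using S17 by blast
lemma closed: "A \<in> obj V \<Longrightarrow> B \<in> obj V \<Longrightarrow> X \<in> obj V \<Longrightarrow> f \<in> hom V (tens V X A) B \<Longrightarrow>
           \<exists>!g. g \<in> hom V X (ihom V A B) \<and> ev V A B \<cdot> tensm V g (cid V A) = f"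
  using S17 by blast

definition unc :: "'o \<Rightarrow> 'o \<Rightarrow> 'm \<Rightarrow> 'm" where
  "unc A B g = ev V A B \<cdot> tensm V g (cid V A)"

lemma unc_hom[intro]: "g \<in> hom V X (ihom V A B) \<Longrightarrow> A \<in> obj V \<Longrightarrow> B \<in> obj V \<Longrightarrow> unc A B g \<in> hom V (tens V X A) B"
  unfolding unc_def by (intro comp_hom[OF tensm_hom]) auto

lemma unc_inj: "g1 \<in> hom V X (ihom V A B) \<Longrightarrow> g2 \<in> hom V X (ihom V A B) \<Longrightarrow> A \<in> obj V \<Longrightarrow> B \<in> obj V \<Longrightarrow>
   unc A B g1 = unc A B g2 \<Longrightarrow> g1 = g2"
proof -
  assume a: "g1 \<in> hom V X (ihom V A B)" "g2 \<in> hom V X (ihom V A B)" "A \<in> obj V" "B \<in> obj V"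
     and e: "unc A B g1 = unc A B g2"
  have X: "X \<in> obj V" using a hom_obj1 by blast
  have "unc A B g1 \<in> hom V (tens V X A) B" using a by blast
  from closed[OF a(3,4) X this] have "\<exists>!g. g \<in> hom V X (ihom V A B) \<and> ev V A B \<cdot> tensm V g (cid V A) = unc A B g1" .
  then show ?thesis using a e unfolding unc_def by (metis (no_types, lifting))
qed

lemma unc_surj: "h \<in> hom V (tens V X A) B \<Longrightarrow> X \<in> obj V \<Longrightarrow> A \<in> obj V \<Longrightarrow> B \<in> obj V \<Longrightarrow>
   \<exists>g \<in> hom V X (ihom V A B). unc A B g = h"
proof -
  assume a: "h \<in> hom V (tens V X A) B" "X \<in> obj V" "A \<in> obj V" "B \<in> obj V"
  from closed[OF a(3,4,2,1)] obtain g where "g \<in> hom V X (ihom V A B)" "ev V A B \<cdot> tensm V g (cid V A) = h"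
    by blast
  thus ?thesis unfolding unc_def by blast
qed

lemma unc_comp: "g \<in> hom V X (ihom V A B) \<Longrightarrow> h \<in> hom V Y X \<Longrightarrow> A \<in> obj V \<Longrightarrow> B \<in> obj V \<Longrightarrow>
   unc A B (g \<cdot> h) = unc A B g \<cdot> tensm V h (cid V A)"
proof -
  assume a: "g \<in> hom V X (ihom V A B)" "h \<in> hom V Y X" "A \<in> obj V" "B \<in> obj V"
  have "tensm V (g \<cdot> h) (cid V A) = tensm V (g \<cdot> h) (cid V A \<cdot> cid V A)" using comp_id_l[OF id_hom[OF a(3)]] by simp
  also have "\<dots> = tensm V g (cid V A) \<cdot> tensm V h (cid V A)"
    using a by (intro tensm_comp) auto
  finally have t: "tensm V (g \<cdot> h) (cid V A) = tensm V g (cid V A) \<cdot> tensm V h (cid V A)" .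
  have X: "X \<in> obj V" "Y \<in> obj V" using a hom_obj1 by blast+
  have h1: "tensm V h (cid V A) \<in> hom V (tens V Y A) (tens V X A)" using a by blast
  have h2: "tensm V g (cid V A) \<in> hom V (tens V X A) (tens V (ihom V A B) A)" using a by blast
  show ?thesis unfolding unc_def t using assoc[OF h1 h2 ev_hom[OF a(3,4)]] .
qed

end

context smc begin

lemma ihom_r_prop: assumes a: "m \<in> hom V B1 B2" "A \<in> obj V"
  shows "ihom_r V A m \<in> hom V (ihom V A B1) (ihom V A B2) \<and> unc A B2 (ihom_r V A m) = m \<cdot> ev V A B1"
proof -
  have B: "B1 \<in> obj V" "B2 \<in> obj V" using a hom_obj1 hom_obj2 by blast+
  have "m \<cdot> ev V A B1 \<in> hom V (tens V (ihom V A B1) A) B2" using a B by blast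
  from closed[OF a(2) B(2) ihom_obj[OF a(2) B(1)] this]
  have ex: "\<exists>!g. g \<in> hom V (ihom V A B1) (ihom V A B2) \<and> ev V A B2 \<cdot> tensm V g (cid V A) = m \<cdot> ev V A B1" .
  show ?thesis unfolding ihom_r_def hom_dom[OF a(1)] hom_cod[OF a(1)] unc_def
    using theI'[OF ex] .
qed

lemma ihom_r_hom[intro]: "m \<in> hom V B1 B2 \<Longrightarrow> A \<in> obj V \<Longrightarrow> ihom_r V A m \<in> hom V (ihom V A B1) (ihom V A B2)"
  using ihom_r_prop by blast
lemma unc_ihom_r: "m \<in> hom V B1 B2 \<Longrightarrow> A \<in> obj V \<Longrightarrow> unc A B2 (ihom_r V A m) = m \<cdot> ev V A B1"
  using ihom_r_prop by blast

lemma ihom_l_prop: assumes a: "e \<in> hom V A1 A2" "B \<in> obj V"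
  shows "ihom_l V e B \<in> hom V (ihom V A2 B) (ihom V A1 B) \<and>
     unc A1 B (ihom_l V e B) = ev V A2 B \<cdot> tensm V (cid V (ihom V A2 B)) e"
proof -
  have A: "A1 \<in> obj V" "A2 \<in> obj V" using a hom_obj1 hom_obj2 by blast+
  have "ev V A2 B \<cdot> tensm V (cid V (ihom V A2 B)) e \<in> hom V (tens V (ihom V A2 B) A1) B"
    using a A by (intro comp_hom[OF tensm_hom]) auto
  from closed[OF A(1) a(2) ihom_obj[OF A(2) a(2)] this]
  have ex: "\<exists>!g. g \<in> hom V (ihom V A2 B) (ihom V A1 B) \<and> ev V A1 B \<cdot> tensm V g (cid V A1) = ev V A2 B \<cdot> tensm V (cid V (ihom V A2 B)) e" .
  show ?thesis unfolding ihom_l_def hom_dom[OF a(1)] hom_cod[OF a(1)] unc_def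
    using theI'[OF ex] .
qed

lemma ihom_l_hom[intro]: "e \<in> hom V A1 A2 \<Longrightarrow> B \<in> obj V \<Longrightarrow> ihom_l V e B \<in> hom V (ihom V A2 B) (ihom V A1 B)"
  using ihom_l_prop by blast
lemma unc_ihom_l: "e \<in> hom V A1 A2 \<Longrightarrow> B \<in> obj V \<Longrightarrow> unc A1 B (ihom_l V e B) = ev V A2 B \<cdot> tensm V (cid V (ihom V A2 B)) e"
  using ihom_l_prop by blast

lemma unc_r: assumes a: "g \<in> hom V X (ihom V A B1)" "m \<in> hom V B1 B2" "A \<in> obj V"
  shows "unc A B2 (ihom_r V A m \<cdot> g) = m \<cdot> unc A B1 g"
proof -
  have B: "B1 \<in> obj V" "B2 \<in> obj V" using a hom_obj1 hom_obj2 by blast+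
  have "unc A B2 (ihom_r V A m \<cdot> g) = unc A B2 (ihom_r V A m) \<cdot> tensm V g (cid V A)"
    using unc_comp[OF ihom_r_hom[OF a(2,3)] a(1) a(3) B(2)] .
  also have "\<dots> = (m \<cdot> ev V A B1) \<cdot> tensm V g (cid V A)" using unc_ihom_r[OF a(2,3)] by simp
  also have "\<dots> = m \<cdot> unc A B1 g" unfolding unc_def
    using assoc[OF tensm_hom[OF a(1) id_hom[OF a(3)]] ev_hom[OF a(3) B(1)] a(2)] by simp
  finally show ?thesis .
qed

lemma unc_l: assumes a: "g \<in> hom V X (ihom V A2 B)" "e \<in> hom V A1 A2" "B \<in> obj V"
  shows "unc A1 B (ihom_l V e B \<cdot> g) = unc A2 B g \<cdot> tensm V (cid V X) e"
proof -
  have A: "A1 \<in> obj V" "A2 \<in> obj V" using a hom_obj1 hom_obj2 by blast+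
  have X: "X \<in> obj V" using a hom_obj1 by blast
  have I: "ihom V A2 B \<in> obj V" using A a by blast
  have "unc A1 B (ihom_l V e B \<cdot> g) = unc A1 B (ihom_l V e B) \<cdot> tensm V g (cid V A1)"
    using unc_comp[OF ihom_l_hom[OF a(2,3)] a(1) A(1) a(3)] .
  also have "\<dots> = (ev V A2 B \<cdot> tensm V (cid V (ihom V A2 B)) e) \<cdot> tensm V g (cid V A1)"
    using unc_ihom_l[OF a(2,3)] by simp
  also have "\<dots> = ev V A2 B \<cdot> (tensm V (cid V (ihom V A2 B)) e \<cdot> tensm V g (cid V A1))"
    using assoc[OF tensm_hom[OF a(1) id_hom[OF A(1)]] tensm_hom[OF id_hom[OF I] a(2)] ev_hom[OF A(2) a(3)]] by simp
  also have "tensm V (cid V (ihom V A2 B)) e \<cdot> tensm V g (cid V A1) = tensm V (cid V (ihom V A2 B) \<cdot> g) (e \<cdot> cid V A1)"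
    using tensm_comp[OF a(1) id_hom[OF I] id_hom[OF A(1)] a(2)] by simp
  also have "\<dots> = tensm V (g \<cdot> cid V X) (cid V A2 \<cdot> e)"
    using comp_id_l[OF a(1)] comp_id_r[OF a(1)] comp_id_l[OF a(2)] comp_id_r[OF a(2)] by simp
  also have "\<dots> = tensm V g (cid V A2) \<cdot> tensm V (cid V X) e"
    using tensm_comp[OF id_hom[OF X] a(1) a(2) id_hom[OF A(2)]] .
  also have "ev V A2 B \<cdot> (tensm V g (cid V A2) \<cdot> tensm V (cid V X) e) = unc A2 B g \<cdot> tensm V (cid V X) e"
    unfolding unc_def
    using assoc[OF tensm_hom[OF id_hom[OF X] a(2)] tensm_hom[OF a(1) id_hom[OF A(2)]] ev_hom[OF A(2) a(3)]] .
  finally show ?thesis .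
qed

lemma ihom_r_comp: assumes a: "f \<in> hom V B1 B2" "g \<in> hom V B2 B3" "A \<in> obj V"
  shows "ihom_r V A (g \<cdot> f) = ihom_r V A g \<cdot> ihom_r V A f"
proof -
  have B: "B1 \<in> obj V" "B3 \<in> obj V" using a hom_obj1 hom_obj2 by blast+
  have gf: "g \<cdot> f \<in> hom V B1 B3" using a by blast
  have "unc A B3 (ihom_r V A g \<cdot> ihom_r V A f) = g \<cdot> unc A B2 (ihom_r V A f)"
    using unc_r[OF ihom_r_hom[OF a(1,3)] a(2,3)] .
  also have "\<dots> = g \<cdot> (f \<cdot> ev V A B1)" using unc_ihom_r[OF a(1,3)] by simp
  also have "\<dots> = (g \<cdot> f) \<cdot> ev V A B1" using assoc[OF ev_hom[OF a(3) B(1)] a(1,2)] .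
  also have "\<dots> = unc A B3 (ihom_r V A (g \<cdot> f))" using unc_ihom_r[OF gf a(3)] by simp
  finally show ?thesis
    using unc_inj[OF ihom_r_hom[OF gf a(3)] comp_hom[OF ihom_r_hom[OF a(1,3)] ihom_r_hom[OF a(2,3)]] a(3) B(2)]
    by simp
qed

lemma mono_homI: assumes "m \<in> arr V"
  and "\<And>g h X. g \<in> hom V X (cdom V m) \<Longrightarrow> h \<in> hom V X (cdom V m) \<Longrightarrow> m \<cdot> g = m \<cdot> h \<Longrightarrow> g = h"
  shows "mono V m"
  unfolding mono_def using assms homI' by metis

lemma monoD: "mono V m \<Longrightarrow> g \<in> hom V X (cdom V m) \<Longrightarrow> h \<in> hom V X (cdom V m) \<Longrightarrow> m \<cdot> g = m \<cdot> h \<Longrightarrow> g = h"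
  unfolding mono_def using hom_arr hom_dom hom_cod by metis

lemma epi_homI: assumes "e \<in> arr V"
  and "\<And>g h Y. g \<in> hom V (ccod V e) Y \<Longrightarrow> h \<in> hom V (ccod V e) Y \<Longrightarrow> g \<cdot> e = h \<cdot> e \<Longrightarrow> g = h"
  shows "epi V e"
  unfolding epi_def using assms homI' by metis

lemma epiD: "epi V e \<Longrightarrow> g \<in> hom V (ccod V e) Y \<Longrightarrow> h \<in> hom V (ccod V e) Y \<Longrightarrow> g \<cdot> e = h \<cdot> e \<Longrightarrow> g = h"
  unfolding epi_def using hom_arr hom_dom hom_cod by metis

lemma mono_ihom_r: assumes m: "mono V m" "m \<in> hom V B1 B2" and A: "A \<in> obj V"
  shows "mono V (ihom_r V A m)"
proof (rule mono_homI)
  have B: "B1 \<in> obj V" "B2 \<in> obj V" using m hom_obj1 hom_obj2 by blast+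
  show "ihom_r V A m \<in> arr V" using hom_arr[OF ihom_r_hom[OF m(2) A]] .
  fix g h X assume g: "g \<in> hom V X (cdom V (ihom_r V A m))" and h: "h \<in> hom V X (cdom V (ihom_r V A m))"
    and eq: "ihom_r V A m \<cdot> g = ihom_r V A m \<cdot> h"
  have d: "cdom V (ihom_r V A m) = ihom V A B1" using hom_dom[OF ihom_r_hom[OF m(2) A]] .
  have g': "g \<in> hom V X (ihom V A B1)" and h': "h \<in> hom V X (ihom V A B1)" using g h d by auto
  have "m \<cdot> unc A B1 g = m \<cdot> unc A B1 h" using unc_r[OF g' m(2) A] unc_r[OF h' m(2) A] eq by simp
  hence "unc A B1 g = unc A B1 h"
    using monoD[OF m(1)] unc_hom[OF g' A B(1)] unc_hom[OF h' A B(1)] hom_dom[OF m(2)] by metis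
  thus "g = h" using unc_inj[OF g' h' A B(1)] by simp
qed

lemma iso_cancel: assumes f: "iso V f" "f \<in> hom V A B" and g: "g \<in> hom V B C" and h: "h \<in> hom V B C"
  and eq: "g \<cdot> f = h \<cdot> f" shows "g = h"
proof -
  obtain f' where f': "f' \<in> hom V B A" "f \<cdot> f' = cid V B"
    using f unfolding iso_def using hom_dom hom_cod by metis
  have "g = g \<cdot> (f \<cdot> f')" using f' g by simp
  also have "\<dots> = (g \<cdot> f) \<cdot> f'" using assoc[OF f'(1) f(2) g] .
  also have "\<dots> = (h \<cdot> f) \<cdot> f'" using eq by simp
  also have "\<dots> = h \<cdot> (f \<cdot> f')" using assoc[OF f'(1) f(2) h] by simp
  also have "\<dots> = h" using f' h by simp
  finally show ?thesis .
qed

end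

context smc begin

lemma epi_tens: assumes e: "epi V e" "e \<in> hom V A1 A2" and X: "X \<in> obj V"
  shows "epi V (tensm V (cid V X) e)"
proof -
  have A: "A1 \<in> obj V" "A2 \<in> obj V" using e hom_obj1 hom_obj2 by blast+
  have t: "tensm V (cid V X) e \<in> hom V (tens V X A1) (tens V X A2)" using e X by blast
  show ?thesis
  proof (rule epi_homI)
    show "tensm V (cid V X) e \<in> arr V" using hom_arr[OF t] .
    fix g h Y assume g0: "g \<in> hom V (ccod V (tensm V (cid V X) e)) Y" and h0: "h \<in> hom V (ccod V (tensm V (cid V X) e)) Y"
      and eq: "g \<cdot> tensm V (cid V X) e = h \<cdot> tensm V (cid V X) e"
    have g: "g \<in> hom V (tens V X A2) Y" and h: "h \<in> hom V (tens V X A2) Y" using g0 h0 hom_cod[OF t] by auto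
    have Y: "Y \<in> obj V" using g hom_obj2 by blast
    have s1: "sigma V A2 X \<in> hom V (tens V A2 X) (tens V X A2)" using A X by blast
    have s1': "sigma V A1 X \<in> hom V (tens V A1 X) (tens V X A1)" using A X by blast
    have s2: "sigma V X A2 \<in> hom V (tens V X A2) (tens V A2 X)" using A X by blast
    have te: "tensm V e (cid V X) \<in> hom V (tens V A1 X) (tens V A2 X)" using e X by blast
    have nat: "sigma V A2 X \<cdot> tensm V e (cid V X) = tensm V (cid V X) e \<cdot> sigma V A1 X"
      using sigma_nat[OF e(2) id_hom[OF X]] .
    have key: "\<And>k. k \<in> hom V (tens V X A2) Y \<Longrightarrow> \<exists>c \<in> hom V A2 (ihom V X Y). unc X Y c = k \<cdot> sigma V A2 X \<and>
                 unc X Y (c \<cdot> e) = (k \<cdot> tensm V (cid V X) e) \<cdot> sigma V A1 X"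
    proof -
      fix k assume k: "k \<in> hom V (tens V X A2) Y"
      have "k \<cdot> sigma V A2 X \<in> hom V (tens V A2 X) Y" using k s1 by blast
      then obtain c where c: "c \<in> hom V A2 (ihom V X Y)" "unc X Y c = k \<cdot> sigma V A2 X"
        using unc_surj A X Y by blast
      have "unc X Y (c \<cdot> e) = unc X Y c \<cdot> tensm V e (cid V X)" using unc_comp[OF c(1) e(2) X Y] .
      also have "\<dots> = k \<cdot> (sigma V A2 X \<cdot> tensm V e (cid V X))" using c(2) assoc[OF te s1 k] by simp
      also have "\<dots> = k \<cdot> (tensm V (cid V X) e \<cdot> sigma V A1 X)" using nat by simp
      also have "\<dots> = (k \<cdot> tensm V (cid V X) e) \<cdot> sigma V A1 X" using assoc[OF s1' t k] .
      finally show "\<exists>c \<in> hom V A2 (ihom V X Y). unc X Y c = k \<cdot> sigma V A2 X \<and>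
                 unc X Y (c \<cdot> e) = (k \<cdot> tensm V (cid V X) e) \<cdot> sigma V A1 X" using c by blast
    qed
    obtain cg where cg: "cg \<in> hom V A2 (ihom V X Y)" "unc X Y cg = g \<cdot> sigma V A2 X"
       "unc X Y (cg \<cdot> e) = (g \<cdot> tensm V (cid V X) e) \<cdot> sigma V A1 X" using key[OF g] by blast
    obtain ch where ch: "ch \<in> hom V A2 (ihom V X Y)" "unc X Y ch = h \<cdot> sigma V A2 X"
       "unc X Y (ch \<cdot> e) = (h \<cdot> tensm V (cid V X) e) \<cdot> sigma V A1 X" using key[OF h] by blast
    have "cg \<cdot> e = ch \<cdot> e"
      using unc_inj[OF comp_hom[OF e(2) cg(1)] comp_hom[OF e(2) ch(1)] X Y] cg(3) ch(3) eq by simp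
    hence "cg = ch" using epiD[OF e(1)] cg(1) ch(1) hom_cod[OF e(2)] by metis
    hence gs: "g \<cdot> sigma V A2 X = h \<cdot> sigma V A2 X" using cg(2) ch(2) by simp
    have inv: "sigma V A2 X \<cdot> sigma V X A2 = cid V (tens V X A2)" using sigma_inv[OF X A(2)] .
    have "g = g \<cdot> (sigma V A2 X \<cdot> sigma V X A2)" using inv g by simp
    also have "\<dots> = (g \<cdot> sigma V A2 X) \<cdot> sigma V X A2" using assoc[OF s2 s1 g] .
    also have "\<dots> = (h \<cdot> sigma V A2 X) \<cdot> sigma V X A2" using gs by simp
    also have "\<dots> = h \<cdot> (sigma V A2 X \<cdot> sigma V X A2)" using assoc[OF s2 s1 h] by simp
    also have "\<dots> = h" using inv h by simp
    finally show "g = h" .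
  qed
qed

lemma lam_e: assumes e: "e \<in> hom V A1 A2"
  shows "lam V A2 \<cdot> tensm V (cid V (tunit V)) e = e \<cdot> lam V A1"
  using lam_nat[OF e] .

lemma VEpis_eq: "VEpis V = Epis V"
proof
  show "VEpis V \<subseteq> Epis V"
  proof
    fix e assume "e \<in> VEpis V"
    hence earr: "e \<in> arr V" and mo: "\<And>B. B \<in> obj V \<Longrightarrow> mono V (ihom_l V e B)" unfolding VEpis_def by auto
    define A1 where "A1 = cdom V e"
    define A2 where "A2 = ccod V e"
    have e: "e \<in> hom V A1 A2" using homI[OF earr] unfolding A1_def A2_def .
    have A: "A1 \<in> obj V" "A2 \<in> obj V" using e hom_obj1 hom_obj2 by blast+
    have U: "tunit V \<in> obj V" by blast
    have l1: "lam V A1 \<in> hom V (tens V (tunit V) A1) A1" using A by blast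
    have l2: "lam V A2 \<in> hom V (tens V (tunit V) A2) A2" using A by blast
    have t: "tensm V (cid V (tunit V)) e \<in> hom V (tens V (tunit V) A1) (tens V (tunit V) A2)" using e U by blast
    have "epi V e"
    proof (rule epi_homI[OF earr])
      fix g h Y assume g0: "g \<in> hom V (ccod V e) Y" and h0: "h \<in> hom V (ccod V e) Y" and eq: "g \<cdot> e = h \<cdot> e"
      have g: "g \<in> hom V A2 Y" and h: "h \<in> hom V A2 Y" using g0 h0 A2_def by auto
      have Y: "Y \<in> obj V" using g hom_obj2 by blast
      have key: "\<And>k. k \<in> hom V A2 Y \<Longrightarrow> \<exists>x \<in> hom V (tunit V) (ihom V A2 Y). unc A2 Y x = k \<cdot> lam V A2 \<and>
                 unc A1 Y (ihom_l V e Y \<cdot> x) = (k \<cdot> e) \<cdot> lam V A1"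
      proof -
        fix k assume k: "k \<in> hom V A2 Y"
        have "k \<cdot> lam V A2 \<in> hom V (tens V (tunit V) A2) Y" using k l2 by blast
        then obtain x where x: "x \<in> hom V (tunit V) (ihom V A2 Y)" "unc A2 Y x = k \<cdot> lam V A2"
          using unc_surj U A Y by blast
        have "unc A1 Y (ihom_l V e Y \<cdot> x) = unc A2 Y x \<cdot> tensm V (cid V (tunit V)) e" using unc_l[OF x(1) e Y] .
        also have "\<dots> = k \<cdot> (lam V A2 \<cdot> tensm V (cid V (tunit V)) e)" using x(2) assoc[OF t l2 k] by simp
        also have "\<dots> = k \<cdot> (e \<cdot> lam V A1)" using lam_e[OF e] by simp
        also have "\<dots> = (k \<cdot> e) \<cdot> lam V A1" using assoc[OF l1 e k] .
        finally show "\<exists>x \<in> hom V (tunit V) (ihom V A2 Y). unc A2 Y x = k \<cdot> lam V A2 \<and>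
                 unc A1 Y (ihom_l V e Y \<cdot> x) = (k \<cdot> e) \<cdot> lam V A1" using x by blast
      qed
      obtain xg where xg: "xg \<in> hom V (tunit V) (ihom V A2 Y)" "unc A2 Y xg = g \<cdot> lam V A2"
        "unc A1 Y (ihom_l V e Y \<cdot> xg) = (g \<cdot> e) \<cdot> lam V A1" using key[OF g] by blast
      obtain xh where xh: "xh \<in> hom V (tunit V) (ihom V A2 Y)" "unc A2 Y xh = h \<cdot> lam V A2"
        "unc A1 Y (ihom_l V e Y \<cdot> xh) = (h \<cdot> e) \<cdot> lam V A1" using key[OF h] by blast
      have il: "ihom_l V e Y \<in> hom V (ihom V A2 Y) (ihom V A1 Y)" using e Y by blast
      have "ihom_l V e Y \<cdot> xg = ihom_l V e Y \<cdot> xh"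
        using unc_inj[OF comp_hom[OF xg(1) il] comp_hom[OF xh(1) il] A(1) Y] xg(3) xh(3) eq by simp
      hence "xg = xh" using monoD[OF mo[OF Y]] xg(1) xh(1) hom_dom[OF il] by metis
      hence "g \<cdot> lam V A2 = h \<cdot> lam V A2" using xg(2) xh(2) by simp
      thus "g = h" using iso_cancel[OF lam_iso[OF A(2)] l2 g h] by simp
    qed
    thus "e \<in> Epis V" unfolding Epis_def by simp
  qed
next
  show "Epis V \<subseteq> VEpis V"
  proof
    fix e assume "e \<in> Epis V"
    hence ep: "epi V e" unfolding Epis_def by simp
    hence earr: "e \<in> arr V" unfolding epi_def by simp
    define A1 where "A1 = cdom V e"
    define A2 where "A2 = ccod V e"
    have e: "e \<in> hom V A1 A2" using homI[OF earr] unfolding A1_def A2_def .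
    have A: "A1 \<in> obj V" "A2 \<in> obj V" using e hom_obj1 hom_obj2 by blast+
    have "mono V (ihom_l V e B)" if B: "B \<in> obj V" for B
    proof (rule mono_homI)
      have il: "ihom_l V e B \<in> hom V (ihom V A2 B) (ihom V A1 B)" using e B by blast
      show "ihom_l V e B \<in> arr V" using hom_arr[OF il] .
      fix g h X assume g0: "g \<in> hom V X (cdom V (ihom_l V e B))" and h0: "h \<in> hom V X (cdom V (ihom_l V e B))"
        and eq: "ihom_l V e B \<cdot> g = ihom_l V e B \<cdot> h"
      have g: "g \<in> hom V X (ihom V A2 B)" and h: "h \<in> hom V X (ihom V A2 B)" using g0 h0 hom_dom[OF il] by auto
      have X: "X \<in> obj V" using g hom_obj1 by blast
      have t: "tensm V (cid V X) e \<in> hom V (tens V X A1) (tens V X A2)" using e X by blast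
      have "unc A2 B g \<cdot> tensm V (cid V X) e = unc A2 B h \<cdot> tensm V (cid V X) e"
        using unc_l[OF g e B] unc_l[OF h e B] eq by simp
      hence "unc A2 B g = unc A2 B h"
        using epiD[OF epi_tens[OF ep e X]] unc_hom[OF g A(2) B] unc_hom[OF h A(2) B] hom_cod[OF t] by metis
      thus "g = h" using unc_inj[OF g h A(2) B] by simp
    qed
    thus "e \<in> VEpis V" unfolding VEpis_def using earr by simp
  qed
qed

end

context smc begin

lemma Vorth_square: assumes e: "e \<in> hom V A1 A2" and m: "m \<in> hom V B1 B2"
  shows "ihom_l V e B2 \<cdot> ihom_r V A2 m = ihom_r V A1 m \<cdot> ihom_l V e B1"
proof -
  have A: "A1 \<in> obj V" "A2 \<in> obj V" using e hom_obj1 hom_obj2 by blast+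
  have B: "B1 \<in> obj V" "B2 \<in> obj V" using m hom_obj1 hom_obj2 by blast+
  have r2: "ihom_r V A2 m \<in> hom V (ihom V A2 B1) (ihom V A2 B2)" using m A by blast
  have r1: "ihom_r V A1 m \<in> hom V (ihom V A1 B1) (ihom V A1 B2)" using m A by blast
  have l1: "ihom_l V e B1 \<in> hom V (ihom V A2 B1) (ihom V A1 B1)" using e B by blast
  have l2: "ihom_l V e B2 \<in> hom V (ihom V A2 B2) (ihom V A1 B2)" using e B by blast
  have I: "ihom V A2 B1 \<in> obj V" using A B by blast
  have t: "tensm V (cid V (ihom V A2 B1)) e \<in> hom V (tens V (ihom V A2 B1) A1) (tens V (ihom V A2 B1) A2)"
    using e I by blast
  have "unc A1 B2 (ihom_l V e B2 \<cdot> ihom_r V A2 m) = unc A2 B2 (ihom_r V A2 m) \<cdot> tensm V (cid V (ihom V A2 B1)) e"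
    using unc_l[OF r2 e B(2)] .
  also have "\<dots> = (m \<cdot> ev V A2 B1) \<cdot> tensm V (cid V (ihom V A2 B1)) e" using unc_ihom_r[OF m A(2)] by simp
  also have "\<dots> = m \<cdot> (ev V A2 B1 \<cdot> tensm V (cid V (ihom V A2 B1)) e)" using assoc[OF t ev_hom[OF A(2) B(1)] m] by simp
  also have "\<dots> = m \<cdot> unc A1 B1 (ihom_l V e B1)" using unc_ihom_l[OF e B(1)] by simp
  also have "\<dots> = unc A1 B2 (ihom_r V A1 m \<cdot> ihom_l V e B1)" using unc_r[OF l1 m A(1)] by simp
  finally show ?thesis using unc_inj[OF comp_hom[OF r2 l2] comp_hom[OF l1 r1] A(1) B(2)] by simp
qed

lemma Vorth_unfold: assumes e: "e \<in> hom V A1 A2" and m: "m \<in> hom V B1 B2"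
  shows "Vorth V e m \<longleftrightarrow> (\<forall>X\<in>obj V. \<forall>x1\<in>hom V X (ihom V A2 B2). \<forall>x2\<in>hom V X (ihom V A1 B1).
        ihom_l V e B2 \<cdot> x1 = ihom_r V A1 m \<cdot> x2 \<longrightarrow>
        (\<exists>!u. u \<in> hom V X (ihom V A2 B1) \<and> ihom_r V A2 m \<cdot> u = x1 \<and> ihom_l V e B1 \<cdot> u = x2))"
proof -
  have A: "A1 \<in> obj V" "A2 \<in> obj V" using e hom_obj1 hom_obj2 by blast+
  have B: "B1 \<in> obj V" "B2 \<in> obj V" using m hom_obj1 hom_obj2 by blast+
  have r2: "ihom_r V A2 m \<in> hom V (ihom V A2 B1) (ihom V A2 B2)" using m A by blast
  have r1: "ihom_r V A1 m \<in> hom V (ihom V A1 B1) (ihom V A1 B2)" using m A by blast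
  have l1: "ihom_l V e B1 \<in> hom V (ihom V A2 B1) (ihom V A1 B1)" using e B by blast
  have l2: "ihom_l V e B2 \<in> hom V (ihom V A2 B2) (ihom V A1 B2)" using e B by blast
  have sq: "ihom_l V e B2 \<cdot> ihom_r V A2 m = ihom_r V A1 m \<cdot> ihom_l V e B1" using Vorth_square[OF e m] .
  have d: "ccod V e = A2" "cdom V e = A1" "ccod V m = B2" "cdom V m = B1"
    using e m hom_dom hom_cod by blast+
  have d2: "cdom V (ihom_r V A2 m) = ihom V A2 B1" "cdom V (ihom_l V e B2) = ihom V A2 B2"
     "cdom V (ihom_r V A1 m) = ihom V A1 B1" "ccod V (ihom_l V e B2) = ihom V A1 B2"
     "ccod V (ihom_r V A1 m) = ihom V A1 B2"
    using r2 l2 r1 hom_dom hom_cod by blast+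
  show ?thesis
    unfolding Vorth_def is_pullback_def d d2
    using hom_arr[OF e] hom_arr[OF m] hom_arr[OF l2] hom_arr[OF r1] r2 l1 sq by simp
qed

lemma Vorth_diag: assumes V: "Vorth V e m" and e: "e \<in> hom V A1 A2" and m: "m \<in> hom V B1 B2"
  and u: "u \<in> hom V A1 B1" and v: "v \<in> hom V A2 B2" and sq: "m \<cdot> u = v \<cdot> e"
  shows "\<exists>d \<in> hom V A2 B1. d \<cdot> e = u \<and> m \<cdot> d = v"
proof -
  have A: "A1 \<in> obj V" "A2 \<in> obj V" using e hom_obj1 hom_obj2 by blast+
  have B: "B1 \<in> obj V" "B2 \<in> obj V" using m hom_obj1 hom_obj2 by blast+
  have U: "tunit V \<in> obj V" by blast
  have l1: "lam V A1 \<in> hom V (tens V (tunit V) A1) A1" using A by blast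
  have l2: "lam V A2 \<in> hom V (tens V (tunit V) A2) A2" using A by blast
  have t: "tensm V (cid V (tunit V)) e \<in> hom V (tens V (tunit V) A1) (tens V (tunit V) A2)" using e U by blast
  have r2: "ihom_r V A2 m \<in> hom V (ihom V A2 B1) (ihom V A2 B2)" using m A by blast
  have r1: "ihom_r V A1 m \<in> hom V (ihom V A1 B1) (ihom V A1 B2)" using m A by blast
  have il1: "ihom_l V e B1 \<in> hom V (ihom V A2 B1) (ihom V A1 B1)" using e B by blast
  have il2: "ihom_l V e B2 \<in> hom V (ihom V A2 B2) (ihom V A1 B2)" using e B by blast
  have "v \<cdot> lam V A2 \<in> hom V (tens V (tunit V) A2) B2" using v l2 by blast
  then obtain x1 where x1: "x1 \<in> hom V (tunit V) (ihom V A2 B2)" "unc A2 B2 x1 = v \<cdot> lam V A2"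
    using unc_surj U A B by blast
  have "u \<cdot> lam V A1 \<in> hom V (tens V (tunit V) A1) B1" using u l1 by blast
  then obtain x2 where x2: "x2 \<in> hom V (tunit V) (ihom V A1 B1)" "unc A1 B1 x2 = u \<cdot> lam V A1"
    using unc_surj U A B by blast
  have "unc A1 B2 (ihom_l V e B2 \<cdot> x1) = unc A2 B2 x1 \<cdot> tensm V (cid V (tunit V)) e" using unc_l[OF x1(1) e B(2)] .
  also have "\<dots> = v \<cdot> (lam V A2 \<cdot> tensm V (cid V (tunit V)) e)" using x1(2) assoc[OF t l2 v] by simp
  also have "\<dots> = v \<cdot> (e \<cdot> lam V A1)" using lam_e[OF e] by simp
  also have "\<dots> = (v \<cdot> e) \<cdot> lam V A1" using assoc[OF l1 e v] .
  also have "\<dots> = (m \<cdot> u) \<cdot> lam V A1" using sq by simp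
  also have "\<dots> = m \<cdot> unc A1 B1 x2" using x2(2) assoc[OF l1 u m] by simp
  also have "\<dots> = unc A1 B2 (ihom_r V A1 m \<cdot> x2)" using unc_r[OF x2(1) m A(1)] by simp
  finally have "ihom_l V e B2 \<cdot> x1 = ihom_r V A1 m \<cdot> x2"
    using unc_inj[OF comp_hom[OF x1(1) il2] comp_hom[OF x2(1) r1] A(1) B(2)] by simp
  then obtain w where w: "w \<in> hom V (tunit V) (ihom V A2 B1)" "ihom_r V A2 m \<cdot> w = x1" "ihom_l V e B1 \<cdot> w = x2"
    using V[unfolded Vorth_unfold[OF e m]] U x1(1) x2(1) by blast
  define W where "W = unc A2 B1 w"
  have W: "W \<in> hom V (tens V (tunit V) A2) B1" unfolding W_def using w(1) A B by blast
  obtain l' where l': "l' \<in> hom V A2 (tens V (tunit V) A2)" "lam V A2 \<cdot> l' = cid V A2" "l' \<cdot> lam V A2 = cid V (tens V (tunit V) A2)"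
    using lam_iso[OF A(2)] l2 unfolding iso_def using hom_dom hom_cod by metis
  define d where "d = W \<cdot> l'"
  have dh: "d \<in> hom V A2 B1" unfolding d_def using l'(1) W by blast
  have mW: "m \<cdot> W = v \<cdot> lam V A2" using unc_r[OF w(1) m A(2)] w(2) x1(2) unfolding W_def by simp
  have "m \<cdot> d = (m \<cdot> W) \<cdot> l'" unfolding d_def using assoc[OF l'(1) W m] .
  also have "\<dots> = v \<cdot> (lam V A2 \<cdot> l')" using mW assoc[OF l'(1) l2 v] by simp
  also have "\<dots> = v" using l'(2) v by simp
  finally have md: "m \<cdot> d = v" .
  have Wt: "W \<cdot> tensm V (cid V (tunit V)) e = u \<cdot> lam V A1" using unc_l[OF w(1) e B(1)] w(3) x2(2) unfolding W_def by simp
  have "(d \<cdot> e) \<cdot> lam V A1 = d \<cdot> (e \<cdot> lam V A1)" using assoc[OF l1 e dh] by simp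
  also have "\<dots> = d \<cdot> (lam V A2 \<cdot> tensm V (cid V (tunit V)) e)" using lam_e[OF e] by simp
  also have "\<dots> = (d \<cdot> lam V A2) \<cdot> tensm V (cid V (tunit V)) e" using assoc[OF t l2 dh] .
  also have "d \<cdot> lam V A2 = W \<cdot> (l' \<cdot> lam V A2)" unfolding d_def using assoc[OF l2 l'(1) W] by simp
  also have "\<dots> = W" using l'(3) W by simp
  finally have "(d \<cdot> e) \<cdot> lam V A1 = u \<cdot> lam V A1" using Wt by simp
  hence "d \<cdot> e = u" using iso_cancel[OF lam_iso[OF A(1)] l1 comp_hom[OF e dh] u] by simp
  thus ?thesis using dh md by blast
qed

lemma strong_Vorth: assumes ep: "epi V e" and ms: "m \<in> StrMonos V" shows "Vorth V e m"
proof -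
  have earr: "e \<in> arr V" using ep unfolding epi_def by simp
  have mm: "mono V m" and orth: "\<And>e. epi V e \<Longrightarrow> orth V e m" using ms unfolding StrMonos_def by auto
  have marr: "m \<in> arr V" using mm unfolding mono_def by simp
  define A1 where "A1 = cdom V e"
  define A2 where "A2 = ccod V e"
  define B1 where "B1 = cdom V m"
  define B2 where "B2 = ccod V m"
  have e: "e \<in> hom V A1 A2" using homI[OF earr] unfolding A1_def A2_def .
  have m: "m \<in> hom V B1 B2" using homI[OF marr] unfolding B1_def B2_def .
  have A: "A1 \<in> obj V" "A2 \<in> obj V" using e hom_obj1 hom_obj2 by blast+
  have B: "B1 \<in> obj V" "B2 \<in> obj V" using m hom_obj1 hom_obj2 by blast+
  have r2: "ihom_r V A2 m \<in> hom V (ihom V A2 B1) (ihom V A2 B2)" using m A by blast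
  have r1: "ihom_r V A1 m \<in> hom V (ihom V A1 B1) (ihom V A1 B2)" using m A by blast
  have il1: "ihom_l V e B1 \<in> hom V (ihom V A2 B1) (ihom V A1 B1)" using e B by blast
  have il2: "ihom_l V e B2 \<in> hom V (ihom V A2 B2) (ihom V A1 B2)" using e B by blast
  show ?thesis unfolding Vorth_unfold[OF e m]
  proof (intro ballI impI)
    fix X x1 x2 assume X: "X \<in> obj V" and x1: "x1 \<in> hom V X (ihom V A2 B2)" and x2: "x2 \<in> hom V X (ihom V A1 B1)"
      and eq: "ihom_l V e B2 \<cdot> x1 = ihom_r V A1 m \<cdot> x2"
    define t where "t = tensm V (cid V X) e"
    have t: "t \<in> hom V (tens V X A1) (tens V X A2)" unfolding t_def using e X by blast
    have et: "epi V t" unfolding t_def using epi_tens[OF ep e X] .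
    have o: "orth V t m" using orth[OF et] .
    have u1: "unc A2 B2 x1 \<in> hom V (tens V X A2) B2" using x1 A B by blast
    have u2: "unc A1 B1 x2 \<in> hom V (tens V X A1) B1" using x2 A B by blast
    have "m \<cdot> unc A1 B1 x2 = unc A1 B2 (ihom_r V A1 m \<cdot> x2)" using unc_r[OF x2 m A(1)] by simp
    also have "\<dots> = unc A1 B2 (ihom_l V e B2 \<cdot> x1)" using eq by simp
    also have "\<dots> = unc A2 B2 x1 \<cdot> t" unfolding t_def using unc_l[OF x1 e B(2)] .
    finally have sq: "m \<cdot> unc A1 B1 x2 = unc A2 B2 x1 \<cdot> t" .
    have dt: "cdom V t = tens V X A1" "ccod V t = tens V X A2" using t hom_dom hom_cod by blast+
    have dm: "cdom V m = B1" "ccod V m = B2" using m hom_dom hom_cod by blast+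
    obtain d where d: "d \<in> hom V (tens V X A2) B1" "d \<cdot> t = unc A1 B1 x2" "m \<cdot> d = unc A2 B2 x1"
      using o u1 u2 sq unfolding orth_def dt dm by blast
    obtain w where w: "w \<in> hom V X (ihom V A2 B1)" "unc A2 B1 w = d" using unc_surj[OF d(1) X A(2) B(1)] by blast
    have w1: "ihom_r V A2 m \<cdot> w = x1"
      using unc_inj[OF comp_hom[OF w(1) r2] x1 A(2) B(2)] unc_r[OF w(1) m A(2)] w(2) d(3) by simp
    have w2: "ihom_l V e B1 \<cdot> w = x2"
      using unc_inj[OF comp_hom[OF w(1) il1] x2 A(1) B(1)] unc_l[OF w(1) e B(1)] w(2) d(2) unfolding t_def by simp
    have mr: "mono V (ihom_r V A2 m)" using mono_ihom_r[OF mm m A(2)] .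
    show "\<exists>!u. u \<in> hom V X (ihom V A2 B1) \<and> ihom_r V A2 m \<cdot> u = x1 \<and> ihom_l V e B1 \<cdot> u = x2"
    proof (rule ex1I[where a=w])
      show "w \<in> hom V X (ihom V A2 B1) \<and> ihom_r V A2 m \<cdot> w = x1 \<and> ihom_l V e B1 \<cdot> w = x2" using w w1 w2 by blast
      fix u assume "u \<in> hom V X (ihom V A2 B1) \<and> ihom_r V A2 m \<cdot> u = x1 \<and> ihom_l V e B1 \<cdot> u = x2"
      thus "u = w" using monoD[OF mr] w(1) w1 hom_dom[OF r2] by metis
    qed
  qed
qed

end


definition eqJ :: "(nat,nat) cat" where
  "eqJ = \<lparr>obj = {0,1}, arr = {0,1,2,3}, cdom = (\<lambda>a. if a = 1 then 1 else 0),
          ccod = (\<lambda>a. if a = 0 then 0 else 1), cid = (\<lambda>j. j), ccomp = (\<lambda>g f. if f \<le> 1 then g else f)\<rparr>"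

lemma eqJ_simps: "obj eqJ = {0,1}" "arr eqJ = {0,1,2,3}" "cdom eqJ a = (if a = 1 then 1 else 0)"
  "ccod eqJ a = (if a = 0 then 0 else 1)" "cid eqJ j = j" "ccomp eqJ g f = (if f \<le> 1 then g else f)"
  by (simp_all add: eqJ_def)

lemma eqJ_shape: "finite_shape eqJ"
  unfolding finite_shape_def category_def hom_def eqJ_simps by auto

context smc begin

lemma orthI: assumes e: "e \<in> hom V A1 A2" and m: "m \<in> hom V B1 B2" and mm: "mono V m"
  and ex: "\<And>u v. u \<in> hom V A1 B1 \<Longrightarrow> v \<in> hom V A2 B2 \<Longrightarrow> m \<cdot> u = v \<cdot> e \<Longrightarrow> \<exists>d\<in>hom V A2 B1. d \<cdot> e = u \<and> m \<cdot> d = v"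
  shows "orth V e m"
proof -
  have d: "cdom V e = A1" "ccod V e = A2" "cdom V m = B1" "ccod V m = B2" using e m hom_dom hom_cod by blast+
  show ?thesis unfolding orth_def d
  proof (intro conjI ballI impI)
    show "e \<in> arr V" "m \<in> arr V" using e m hom_arr by blast+
    fix u v assume u: "u \<in> hom V A1 B1" and v: "v \<in> hom V A2 B2" and sq: "m \<cdot> u = v \<cdot> e"
    obtain d where dd: "d \<in> hom V A2 B1" "d \<cdot> e = u" "m \<cdot> d = v" using ex[OF u v sq] by blast
    show "\<exists>!d. d \<in> hom V A2 B1 \<and> d \<cdot> e = u \<and> m \<cdot> d = v"
    proof (rule ex1I[where a=d])
      show "d \<in> hom V A2 B1 \<and> d \<cdot> e = u \<and> m \<cdot> d = v" using dd by blast
      fix d' assume "d' \<in> hom V A2 B1 \<and> d' \<cdot> e = u \<and> m \<cdot> d' = v"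
      thus "d' = d" using monoD[OF mm] dd d by metis
    qed
  qed
qed

lemma orthD: assumes o: "orth V e m" and e: "e \<in> hom V A1 A2" and m: "m \<in> hom V B1 B2"
  and u: "u \<in> hom V A1 B1" and v: "v \<in> hom V A2 B2" and sq: "m \<cdot> u = v \<cdot> e"
  shows "\<exists>d\<in>hom V A2 B1. d \<cdot> e = u \<and> m \<cdot> d = v"
proof -
  have d: "cdom V e = A1" "ccod V e = A2" "cdom V m = B1" "ccod V m = B2" using e m hom_dom hom_cod by blast+
  show ?thesis using o u v sq unfolding orth_def d by blast
qed

lemma mono_comp: assumes m1: "mono V m1" "m1 \<in> hom V B1 B2" and m2: "mono V m2" "m2 \<in> hom V B2 B3"
  shows "mono V (m2 \<cdot> m1)"
proof (rule mono_homI)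
  have c: "m2 \<cdot> m1 \<in> hom V B1 B3" using m1 m2 by blast
  show "m2 \<cdot> m1 \<in> arr V" using hom_arr[OF c] .
  fix g h X assume g0: "g \<in> hom V X (cdom V (m2 \<cdot> m1))" and h0: "h \<in> hom V X (cdom V (m2 \<cdot> m1))"
    and eq: "(m2 \<cdot> m1) \<cdot> g = (m2 \<cdot> m1) \<cdot> h"
  have g: "g \<in> hom V X B1" and h: "h \<in> hom V X B1" using g0 h0 hom_dom[OF c] by auto
  have "m2 \<cdot> (m1 \<cdot> g) = m2 \<cdot> (m1 \<cdot> h)" using eq assoc[OF g m1(2) m2(2)] assoc[OF h m1(2) m2(2)] by simp
  hence "m1 \<cdot> g = m1 \<cdot> h" using monoD[OF m2(1)] comp_hom[OF g m1(2)] comp_hom[OF h m1(2)] hom_dom[OF m2(2)] by metis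
  thus "g = h" using monoD[OF m1(1)] g h hom_dom[OF m1(2)] by metis
qed

lemma StrMonosD: "m \<in> StrMonos V \<Longrightarrow> mono V m \<and> m \<in> hom V (cdom V m) (ccod V m)"
  unfolding StrMonos_def mono_def using homI by blast

lemma strong_comp: assumes m1: "m1 \<in> StrMonos V" "m1 \<in> hom V B1 B2" and m2: "m2 \<in> StrMonos V" "m2 \<in> hom V B2 B3"
  shows "m2 \<cdot> m1 \<in> StrMonos V"
proof -
  have mo1: "mono V m1" and o1: "\<And>e. epi V e \<Longrightarrow> orth V e m1" using m1 unfolding StrMonos_def by auto
  have mo2: "mono V m2" and o2: "\<And>e. epi V e \<Longrightarrow> orth V e m2" using m2 unfolding StrMonos_def by auto
  have mc: "mono V (m2 \<cdot> m1)" using mono_comp[OF mo1 m1(2) mo2 m2(2)] .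
  have c: "m2 \<cdot> m1 \<in> hom V B1 B3" using m1 m2 by blast
  have "orth V e (m2 \<cdot> m1)" if ep: "epi V e" for e
  proof -
    have earr: "e \<in> arr V" using ep unfolding epi_def by simp
    have e: "e \<in> hom V (cdom V e) (ccod V e)" using homI[OF earr] .
    show ?thesis
    proof (rule orthI[OF e c mc])
      fix u v assume u: "u \<in> hom V (cdom V e) B1" and v: "v \<in> hom V (ccod V e) B3" and sq: "(m2 \<cdot> m1) \<cdot> u = v \<cdot> e"
      have "m2 \<cdot> (m1 \<cdot> u) = v \<cdot> e" using sq assoc[OF u m1(2) m2(2)] by simp
      then obtain d2 where d2: "d2 \<in> hom V (ccod V e) B2" "d2 \<cdot> e = m1 \<cdot> u" "m2 \<cdot> d2 = v"
        using orthD[OF o2[OF ep] e m2(2) comp_hom[OF u m1(2)] v] by blast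
      obtain d1 where d1: "d1 \<in> hom V (ccod V e) B1" "d1 \<cdot> e = u" "m1 \<cdot> d1 = d2"
        using orthD[OF o1[OF ep] e m1(2) u d2(1)] d2(2) by metis
      have "(m2 \<cdot> m1) \<cdot> d1 = v" using assoc[OF d1(1) m1(2) m2(2)] d1(3) d2(3) by simp
      thus "\<exists>d\<in>hom V (ccod V e) B1. d \<cdot> e = u \<and> (m2 \<cdot> m1) \<cdot> d = v" using d1 by blast
    qed
  qed
  thus ?thesis unfolding StrMonos_def using mc by blast
qed

lemma eq_functor: assumes g: "g \<in> hom V P Y" and h: "h \<in> hom V P Y"
  shows "is_functor eqJ V (\<lambda>j::nat. if j = 0 then P else Y) (\<lambda>a::nat. if a = 0 then cid V P else if a = 1 then cid V Y else if a = 2 then g else h)"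
proof -
  have PY: "P \<in> obj V" "Y \<in> obj V" using g hom_obj1 hom_obj2 by blast+
  have i1: "cid V P \<in> hom V P P" and i2: "cid V Y \<in> hom V Y Y" using PY by blast+
  have c1: "cid V P \<cdot> cid V P = cid V P" using comp_id_l[OF i1] .
  have c2: "cid V Y \<cdot> cid V Y = cid V Y" using comp_id_l[OF i2] .
  have c3: "g \<cdot> cid V P = g" "h \<cdot> cid V P = h" "cid V Y \<cdot> g = g" "cid V Y \<cdot> h = h"
    using comp_id_l[OF g] comp_id_l[OF h] comp_id_r[OF g] comp_id_r[OF h] by auto
  show ?thesis
    unfolding is_functor_def eqJ_simps
    apply (simp only: Ball_def insert_iff empty_iff)
    apply (intro conjI allI impI)
    by (elim disjE; simp del: comp_id_l comp_id_r add: PY i1 i2 g h c1 c2 c3)+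
qed

lemma equalizer: assumes fl: "has_finite_limits V" and g: "g \<in> hom V P Y" and h: "h \<in> hom V P Y"
  shows "\<exists>L k. k \<in> hom V L P \<and> g \<cdot> k = h \<cdot> k \<and> k \<in> StrMonos V \<and>
     (\<forall>X x. x \<in> hom V X P \<and> g \<cdot> x = h \<cdot> x \<longrightarrow> (\<exists>u \<in> hom V X L. k \<cdot> u = x))"
proof -
  have PY: "P \<in> obj V" "Y \<in> obj V" using g hom_obj1 hom_obj2 by blast+
  define Do where "Do = (\<lambda>j::nat. if j = 0 then P else Y)"
  define Da where "Da = (\<lambda>a::nat. if a = 0 then cid V P else if a = 1 then cid V Y else if a = 2 then g else h)"
  have F: "is_functor eqJ V Do Da" unfolding Do_def Da_def using eq_functor[OF g h] .
  obtain L l where lim: "is_limit eqJ V Do Da L l"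
    using fl F eqJ_shape unfolding has_finite_limits_def by blast
  have cone: "L \<in> obj V" "l 0 \<in> hom V L P" "l 1 \<in> hom V L Y" "g \<cdot> l 0 = l 1" "h \<cdot> l 0 = l 1"
  proof -
    have ic: "is_cone eqJ V Do Da L l" using lim unfolding is_limit_def by (elim conjE)
    hence "L \<in> obj V \<and> (\<forall>j\<in>{0,1}. l j \<in> hom V L (Do j)) \<and>
       (\<forall>u\<in>{0,1,2,3}. Da u \<cdot> l (if u = 1 then 1 else 0) = l (if u = 0 then 0 else 1))"
      unfolding is_cone_def eqJ_simps .
    thus "L \<in> obj V" "l 0 \<in> hom V L P" "l 1 \<in> hom V L Y" "g \<cdot> l 0 = l 1" "h \<cdot> l 0 = l 1"
      by (simp_all del: comp_id_l comp_id_r add: Do_def Da_def)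
  qed
  have univ: "\<And>X x. is_cone eqJ V Do Da X x \<Longrightarrow> \<exists>!u. u \<in> hom V X L \<and> (\<forall>j\<in>{0,1}. l j \<cdot> u = x j)"
    using lim unfolding is_limit_def eqJ_simps by blast
  have mkcone: "is_cone eqJ V Do Da X (\<lambda>j. if j = 0 then x else g \<cdot> x)" if x: "x \<in> hom V X P" "g \<cdot> x = h \<cdot> x" for X x
  proof -
    have X: "X \<in> obj V" using x hom_obj1 by blast
    show ?thesis unfolding is_cone_def eqJ_simps Do_def Da_def
      using X x g comp_hom[OF x(1) g] comp_hom[OF x(1) h] comp_id_l[OF x(1)] comp_id_l[OF comp_hom[OF x(1) g]]
      by (simp del: comp_id_l comp_id_r)
  qed
  have fac: "\<forall>X x. x \<in> hom V X P \<and> g \<cdot> x = h \<cdot> x \<longrightarrow> (\<exists>u \<in> hom V X L. l 0 \<cdot> u = x)"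
  proof (intro allI impI)
    fix X x assume xx: "x \<in> hom V X P \<and> g \<cdot> x = h \<cdot> x"
    from univ[OF mkcone] xx obtain u where "u \<in> hom V X L" "\<forall>j\<in>{0,1}. l j \<cdot> u = (\<lambda>j. if j = 0 then x else g \<cdot> x) j"
      by blast
    thus "\<exists>u \<in> hom V X L. l 0 \<cdot> u = x" by auto
  qed
  have mo: "mono V (l 0)"
  proof (rule mono_homI)
    show "l 0 \<in> arr V" using hom_arr[OF cone(2)] .
    fix a b X assume a0: "a \<in> hom V X (cdom V (l 0))" and b0: "b \<in> hom V X (cdom V (l 0))" and eq: "l 0 \<cdot> a = l 0 \<cdot> b"
    have a: "a \<in> hom V X L" and b: "b \<in> hom V X L" using a0 b0 hom_dom[OF cone(2)] by auto
    have la: "l 0 \<cdot> a \<in> hom V X P" using a cone(2) by blast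
    have gx: "g \<cdot> (l 0 \<cdot> a) = h \<cdot> (l 0 \<cdot> a)" using assoc[OF a cone(2) g] assoc[OF a cone(2) h] cone(4,5) by simp
    have l1a: "l 1 \<cdot> a = g \<cdot> (l 0 \<cdot> a)" using assoc[OF a cone(2) g] cone(4) by simp
    have l1b: "l 1 \<cdot> b = g \<cdot> (l 0 \<cdot> b)" using assoc[OF b cone(2) g] cone(4) by simp
    have E: "\<exists>!u. u \<in> hom V X L \<and> (\<forall>j\<in>{0,1}. l j \<cdot> u = (\<lambda>j. if j = 0 then l 0 \<cdot> a else g \<cdot> (l 0 \<cdot> a)) j)"
      using univ[OF mkcone[OF la gx]] .
    have Pa: "a \<in> hom V X L \<and> (\<forall>j\<in>{0,1}. l j \<cdot> a = (\<lambda>j. if j = 0 then l 0 \<cdot> a else g \<cdot> (l 0 \<cdot> a)) j)"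
      using a l1a by simp
    have Pb: "b \<in> hom V X L \<and> (\<forall>j\<in>{0,1}. l j \<cdot> b = (\<lambda>j. if j = 0 then l 0 \<cdot> a else g \<cdot> (l 0 \<cdot> a)) j)"
      using b l1b eq by simp
    show "a = b" using E Pa Pb by blast
  qed
  have str: "l 0 \<in> StrMonos V"
  proof -
    have "orth V e (l 0)" if ep: "epi V e" for e
    proof -
      have earr: "e \<in> arr V" using ep unfolding epi_def by simp
      have e: "e \<in> hom V (cdom V e) (ccod V e)" using homI[OF earr] .
      show ?thesis
      proof (rule orthI[OF e cone(2) mo])
        fix u v assume u: "u \<in> hom V (cdom V e) L" and v: "v \<in> hom V (ccod V e) P" and sq: "l 0 \<cdot> u = v \<cdot> e"
        have "(g \<cdot> v) \<cdot> e = (h \<cdot> v) \<cdot> e"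
          using assoc[OF e v g] assoc[OF e v h] sq assoc[OF u cone(2) g] assoc[OF u cone(2) h] cone(4,5) by simp
        hence gv: "g \<cdot> v = h \<cdot> v" using epiD[OF ep] comp_hom[OF v g] comp_hom[OF v h] by metis
        obtain d where d: "d \<in> hom V (ccod V e) L" "l 0 \<cdot> d = v" using fac v gv by blast
        have "l 0 \<cdot> (d \<cdot> e) = l 0 \<cdot> u" using assoc[OF e d(1) cone(2)] d(2) sq by simp
        hence "d \<cdot> e = u" using monoD[OF mo] comp_hom[OF e d(1)] u hom_dom[OF cone(2)] by metis
        thus "\<exists>d\<in>hom V (ccod V e) L. d \<cdot> e = u \<and> l 0 \<cdot> d = v" using d by blast
      qed
    qed
    thus ?thesis unfolding StrMonos_def using mo by blast
  qed
  have gh: "g \<cdot> l 0 = h \<cdot> l 0" using cone(4,5) by simp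
  have "l 0 \<in> hom V L P \<and> g \<cdot> l 0 = h \<cdot> l 0 \<and> l 0 \<in> StrMonos V \<and>
     (\<forall>X x. x \<in> hom V X P \<and> g \<cdot> x = h \<cdot> x \<longrightarrow> (\<exists>u \<in> hom V X L. l 0 \<cdot> u = x))"
    using cone(2) gh str fac by (intro conjI)
  thus ?thesis by (intro exI)
qed

end

context smc begin

lemma factorization: assumes fwc: "finitely_well_complete V" and f: "f \<in> arr V"
  shows "\<exists>e\<in>Epis V. \<exists>m\<in>StrMonos V. ccod V e = cdom V m \<and> f = m \<cdot> e"
proof -
  define A where "A = cdom V f"
  define B where "B = ccod V f"
  have fh: "f \<in> hom V A B" using homI[OF f] unfolding A_def B_def .
  have AB: "A \<in> obj V" "B \<in> obj V" using fh hom_obj1 hom_obj2 by blast+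
  have fl: "has_finite_limits V" using fwc unfolding finitely_well_complete_def by (elim conjE)
  have wp0: "\<forall>S B. B \<in> obj V \<and> S \<subseteq> StrMonos V \<and> (\<forall>s\<in>S. ccod V s = B) \<longrightarrow>
        (\<exists>P q p. wide_pullback V S (\<lambda>s. s) B P q p \<and> q \<in> StrMonos V)"
    using fwc unfolding finitely_well_complete_def by (elim conjE)
  note wp = wp0[rule_format]
  define S where "S = {s \<in> StrMonos V. ccod V s = B \<and> (\<exists>g \<in> hom V A (cdom V s). s \<cdot> g = f)}"
  have "B \<in> obj V \<and> S \<subseteq> StrMonos V \<and> (\<forall>s\<in>S. ccod V s = B)"
    using AB(2) unfolding S_def by (intro conjI) auto
  from wp[OF this] obtain P q p where W: "wide_pullback V S (\<lambda>s. s) B P q p" and qs: "q \<in> StrMonos V"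
    by (elim exE conjE)
  have W': "B \<in> obj V \<and> P \<in> obj V \<and> q \<in> hom V P B \<and>
     (\<forall>i\<in>S. i \<in> hom V (cdom V i) B \<and> p i \<in> hom V P (cdom V i) \<and> i \<cdot> p i = q) \<and>
     (\<forall>X\<in>obj V. \<forall>y\<in>hom V X B. \<forall>x.
        (\<forall>i\<in>S. x i \<in> hom V X (cdom V i) \<and> i \<cdot> x i = y) \<longrightarrow>
        (\<exists>!u. u \<in> hom V X P \<and> q \<cdot> u = y \<and> (\<forall>i\<in>S. p i \<cdot> u = x i)))"
    using W unfolding wide_pullback_def .
  have P: "P \<in> obj V" using W' by (elim conjE)
  have q: "q \<in> hom V P B" using W' by (elim conjE)
  have ps0: "\<forall>i\<in>S. i \<in> hom V (cdom V i) B \<and> p i \<in> hom V P (cdom V i) \<and> i \<cdot> p i = q" using W' by (elim conjE)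
  have ps: "\<And>s. s \<in> S \<Longrightarrow> s \<in> hom V (cdom V s) B \<and> p s \<in> hom V P (cdom V s) \<and> s \<cdot> p s = q"
    using ps0 by blast
  have univ0: "\<forall>X\<in>obj V. \<forall>y\<in>hom V X B. \<forall>x.
        (\<forall>i\<in>S. x i \<in> hom V X (cdom V i) \<and> i \<cdot> x i = y) \<longrightarrow>
        (\<exists>!u. u \<in> hom V X P \<and> q \<cdot> u = y \<and> (\<forall>i\<in>S. p i \<cdot> u = x i))" using W' by (elim conjE)
  note univ = univ0[rule_format]
  define x where "x = (\<lambda>s. SOME g. g \<in> hom V A (cdom V s) \<and> s \<cdot> g = f)"
  have xs: "\<forall>i\<in>S. x i \<in> hom V A (cdom V i) \<and> i \<cdot> x i = f"
  proof
    fix i assume "i \<in> S"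
    hence "\<exists>g. g \<in> hom V A (cdom V i) \<and> i \<cdot> g = f" unfolding S_def by blast
    thus "x i \<in> hom V A (cdom V i) \<and> i \<cdot> x i = f" unfolding x_def by (rule someI_ex)
  qed
  have "\<exists>!u. u \<in> hom V A P \<and> q \<cdot> u = f \<and> (\<forall>i\<in>S. p i \<cdot> u = x i)"
    by (rule univ[OF AB(1) fh]) (use xs in blast)
  then obtain e where e: "e \<in> hom V A P" "q \<cdot> e = f" by blast
  have qm: "mono V q" using qs unfolding StrMonos_def by blast
  have "epi V e"
  proof (rule epi_homI)
    show "e \<in> arr V" using hom_arr[OF e(1)] .
    fix g h Y assume g0: "g \<in> hom V (ccod V e) Y" and h0: "h \<in> hom V (ccod V e) Y" and eq: "g \<cdot> e = h \<cdot> e"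
    have g: "g \<in> hom V P Y" and h: "h \<in> hom V P Y" using g0 h0 hom_cod[OF e(1)] by auto
    obtain L k where k: "k \<in> hom V L P" "g \<cdot> k = h \<cdot> k" "k \<in> StrMonos V"
      and kf: "\<forall>X x. x \<in> hom V X P \<and> g \<cdot> x = h \<cdot> x \<longrightarrow> (\<exists>u \<in> hom V X L. k \<cdot> u = x)"
      using equalizer[OF fl g h] by blast
    obtain e2 where e2: "e2 \<in> hom V A L" "k \<cdot> e2 = e" using kf e(1) eq by blast
    have qk: "q \<cdot> k \<in> StrMonos V" using strong_comp[OF k(3) k(1) qs q] .
    have qkh: "q \<cdot> k \<in> hom V L B" using k(1) q by blast
    have "(q \<cdot> k) \<cdot> e2 = f" using assoc[OF e2(1) k(1) q] e2(2) e(2) by simp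
    hence "q \<cdot> k \<in> S" unfolding S_def using qk hom_cod[OF qkh] hom_dom[OF qkh] e2(1) by blast
    hence pk: "p (q \<cdot> k) \<in> hom V P L" "(q \<cdot> k) \<cdot> p (q \<cdot> k) = q" using ps hom_dom[OF qkh] by metis+
    have "q \<cdot> (k \<cdot> p (q \<cdot> k)) = q \<cdot> cid V P" using assoc[OF pk(1) k(1) q] pk(2) q by simp
    hence kp: "k \<cdot> p (q \<cdot> k) = cid V P"
      using monoD[OF qm] comp_hom[OF pk(1) k(1)] id_hom[OF P] hom_dom[OF q] by metis
    have "g = g \<cdot> (k \<cdot> p (q \<cdot> k))" using kp g by simp
    also have "\<dots> = (g \<cdot> k) \<cdot> p (q \<cdot> k)" using assoc[OF pk(1) k(1) g] .
    also have "\<dots> = (h \<cdot> k) \<cdot> p (q \<cdot> k)" using k(2) by simp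
    also have "\<dots> = h \<cdot> (k \<cdot> p (q \<cdot> k))" using assoc[OF pk(1) k(1) h] by simp
    also have "\<dots> = h" using kp h by simp
    finally show "g = h" .
  qed
  hence "e \<in> Epis V" unfolding Epis_def by simp
  moreover have "ccod V e = cdom V q" using hom_cod[OF e(1)] hom_dom[OF q] by simp
  ultimately show ?thesis using qs e(2) by blast
qed

lemma lim_pres: assumes J: "category J" and F: "is_functor J V Do Da" and lim: "is_limit J V Do Da L l"
  and A: "A \<in> obj V"
  shows "is_limit J V (\<lambda>j. ihom V A (Do j)) (\<lambda>u. ihom_r V A (Da u)) (ihom V A L) (\<lambda>j. ihom_r V A (l j))"
proof -
  have ic: "is_cone J V Do Da L l" using lim unfolding is_limit_def by (elim conjE)
  have L: "L \<in> obj V" and lj: "\<And>j. j \<in> obj J \<Longrightarrow> l j \<in> hom V L (Do j)"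
    and lu: "\<And>u. u \<in> arr J \<Longrightarrow> Da u \<cdot> l (cdom J u) = l (ccod J u)"
    using ic unfolding is_cone_def by blast+
  have univ0: "\<forall>X x. is_cone J V Do Da X x \<longrightarrow> (\<exists>!u. u \<in> hom V X L \<and> (\<forall>j\<in>obj J. l j \<cdot> u = x j))"
    using lim unfolding is_limit_def by (elim conjE)
  note univ = univ0[rule_format]
  have Dj: "\<And>j. j \<in> obj J \<Longrightarrow> Do j \<in> obj V" using F unfolding is_functor_def by blast
  have Du: "\<And>u. u \<in> arr J \<Longrightarrow> Da u \<in> hom V (Do (cdom J u)) (Do (ccod J u))" using F unfolding is_functor_def by blast
  have Ju: "\<And>u. u \<in> arr J \<Longrightarrow> cdom J u \<in> obj J \<and> ccod J u \<in> obj J" using J unfolding category_def by blast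
  have cone: "is_cone J V (\<lambda>j. ihom V A (Do j)) (\<lambda>u. ihom_r V A (Da u)) (ihom V A L) (\<lambda>j. ihom_r V A (l j))"
    unfolding is_cone_def
  proof (intro conjI ballI)
    show "ihom V A L \<in> obj V" using A L by blast
    fix j assume "j \<in> obj J" thus "ihom_r V A (l j) \<in> hom V (ihom V A L) (ihom V A (Do j))" using lj A by blast
  next
    fix u assume u: "u \<in> arr J"
    show "ihom_r V A (Da u) \<cdot> ihom_r V A (l (cdom J u)) = ihom_r V A (l (ccod J u))"
      using ihom_r_comp[OF lj Du[OF u] A] Ju[OF u] lu[OF u] by simp
  qed
  show ?thesis unfolding is_limit_def
  proof (intro conjI allI impI)
    show "is_cone J V (\<lambda>j. ihom V A (Do j)) (\<lambda>u. ihom_r V A (Da u)) (ihom V A L) (\<lambda>j. ihom_r V A (l j))" by (rule cone)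
    fix X x assume xc: "is_cone J V (\<lambda>j. ihom V A (Do j)) (\<lambda>u. ihom_r V A (Da u)) X x"
    have X: "X \<in> obj V" and xj: "\<And>j. j \<in> obj J \<Longrightarrow> x j \<in> hom V X (ihom V A (Do j))"
      and xu: "\<And>u. u \<in> arr J \<Longrightarrow> ihom_r V A (Da u) \<cdot> x (cdom J u) = x (ccod J u)"
      using xc unfolding is_cone_def by blast+
    define y where "y = (\<lambda>j. unc A (Do j) (x j))"
    have yc: "is_cone J V Do Da (tens V X A) y" unfolding is_cone_def
    proof (intro conjI ballI)
      show "tens V X A \<in> obj V" using X A by blast
      fix j assume "j \<in> obj J" thus "y j \<in> hom V (tens V X A) (Do j)" unfolding y_def using xj A Dj by blast
    next
      fix u assume u: "u \<in> arr J"
      have "Da u \<cdot> y (cdom J u) = unc A (Do (ccod J u)) (ihom_r V A (Da u) \<cdot> x (cdom J u))"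
        unfolding y_def using unc_r[OF xj Du[OF u] A] Ju[OF u] by simp
      thus "Da u \<cdot> y (cdom J u) = y (ccod J u)" using xu[OF u] unfolding y_def by simp
    qed
    obtain w where w: "w \<in> hom V (tens V X A) L" "\<forall>j\<in>obj J. l j \<cdot> w = y j" and wu: "\<And>w'. w' \<in> hom V (tens V X A) L \<and> (\<forall>j\<in>obj J. l j \<cdot> w' = y j) \<Longrightarrow> w' = w"
      using univ[OF yc] by blast
    obtain c where c: "c \<in> hom V X (ihom V A L)" "unc A L c = w" using unc_surj[OF w(1) X A L] by blast
    show "\<exists>!u. u \<in> hom V X (ihom V A L) \<and> (\<forall>j\<in>obj J. ihom_r V A (l j) \<cdot> u = x j)"
    proof (rule ex1I[where a=c])
      have "ihom_r V A (l j) \<cdot> c = x j" if j: "j \<in> obj J" for j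
      proof -
        have "unc A (Do j) (ihom_r V A (l j) \<cdot> c) = l j \<cdot> w" using unc_r[OF c(1) lj[OF j] A] c(2) by simp
        also have "\<dots> = unc A (Do j) (x j)" using w(2) j unfolding y_def by simp
        finally show ?thesis using unc_inj[OF comp_hom[OF c(1) ihom_r_hom[OF lj[OF j] A]] xj[OF j] A Dj[OF j]] by simp
      qed
      thus "c \<in> hom V X (ihom V A L) \<and> (\<forall>j\<in>obj J. ihom_r V A (l j) \<cdot> c = x j)" using c(1) by blast
    next
      fix c' assume c': "c' \<in> hom V X (ihom V A L) \<and> (\<forall>j\<in>obj J. ihom_r V A (l j) \<cdot> c' = x j)"
      have "l j \<cdot> unc A L c' = y j" if j: "j \<in> obj J" for j
        using unc_r[OF conjunct1[OF c'] lj[OF j] A] c' j unfolding y_def by simp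
      hence "unc A L c' = w" using wu unc_hom[OF conjunct1[OF c'] A L] by blast
      thus "c' = c" using unc_inj[OF conjunct1[OF c'] c(1) A L] c(2) by simp
    qed
  qed
qed

lemma wp_pres: assumes W: "wide_pullback V S (\<lambda>s. s) B P q p" and A: "A \<in> obj V"
  shows "wide_pullback V S (\<lambda>i. ihom_r V A ((\<lambda>s. s) i)) (ihom V A B) (ihom V A P)
                  (ihom_r V A q) (\<lambda>i. ihom_r V A (p i))"
proof -
  have W': "B \<in> obj V \<and> P \<in> obj V \<and> q \<in> hom V P B \<and>
     (\<forall>i\<in>S. i \<in> hom V (cdom V i) B \<and> p i \<in> hom V P (cdom V i) \<and> i \<cdot> p i = q) \<and>
     (\<forall>X\<in>obj V. \<forall>y\<in>hom V X B. \<forall>x.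
        (\<forall>i\<in>S. x i \<in> hom V X (cdom V i) \<and> i \<cdot> x i = y) \<longrightarrow>
        (\<exists>!u. u \<in> hom V X P \<and> q \<cdot> u = y \<and> (\<forall>i\<in>S. p i \<cdot> u = x i)))"
    using W unfolding wide_pullback_def .
  have P: "P \<in> obj V" using W' by (elim conjE)
  have q: "q \<in> hom V P B" using W' by (elim conjE)
  have ps0: "\<forall>i\<in>S. i \<in> hom V (cdom V i) B \<and> p i \<in> hom V P (cdom V i) \<and> i \<cdot> p i = q" using W' by (elim conjE)
  have ps: "\<And>s. s \<in> S \<Longrightarrow> s \<in> hom V (cdom V s) B \<and> p s \<in> hom V P (cdom V s) \<and> s \<cdot> p s = q"
    using ps0 by blast
  have univ0: "\<forall>X\<in>obj V. \<forall>y\<in>hom V X B. \<forall>x.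
        (\<forall>i\<in>S. x i \<in> hom V X (cdom V i) \<and> i \<cdot> x i = y) \<longrightarrow>
        (\<exists>!u. u \<in> hom V X P \<and> q \<cdot> u = y \<and> (\<forall>i\<in>S. p i \<cdot> u = x i))" using W' by (elim conjE)
  note univ = univ0[rule_format]
  have B: "B \<in> obj V" using W' by (elim conjE)
  have sh: "\<And>s. s \<in> S \<Longrightarrow> ihom_r V A s \<in> hom V (ihom V A (cdom V s)) (ihom V A B)"
    using ps A by blast
  have dsh: "\<And>s. s \<in> S \<Longrightarrow> cdom V (ihom_r V A s) = ihom V A (cdom V s)" using sh hom_dom by blast
  have Cs: "\<And>s. s \<in> S \<Longrightarrow> cdom V s \<in> obj V" using ps hom_obj1 by blast
  show ?thesis unfolding wide_pullback_def
  proof (intro conjI ballI allI impI)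
    show "ihom V A B \<in> obj V" "ihom V A P \<in> obj V" using A B P by blast+
    show "ihom_r V A q \<in> hom V (ihom V A P) (ihom V A B)" using q A by blast
    fix s assume s: "s \<in> S"
    show "ihom_r V A s \<in> hom V (cdom V (ihom_r V A s)) (ihom V A B)" using sh[OF s] dsh[OF s] by simp
    show "ihom_r V A (p s) \<in> hom V (ihom V A P) (cdom V (ihom_r V A s))" using ps[OF s] A dsh[OF s] by auto
    show "ihom_r V A s \<cdot> ihom_r V A (p s) = ihom_r V A q"
      using ihom_r_comp[of "p s" P "cdom V s" s B A] ps[OF s] A by simp
  next
    fix X y x assume X: "X \<in> obj V" and y: "y \<in> hom V X (ihom V A B)"
      and xx: "\<forall>i\<in>S. x i \<in> hom V X (cdom V (ihom_r V A i)) \<and> ihom_r V A i \<cdot> x i = y"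
    have xi: "\<And>i. i \<in> S \<Longrightarrow> x i \<in> hom V X (ihom V A (cdom V i))" and xe: "\<And>i. i \<in> S \<Longrightarrow> ihom_r V A i \<cdot> x i = y"
      using xx dsh by auto
    define z where "z = (\<lambda>i. unc A (cdom V i) (x i))"
    have zz: "\<forall>i\<in>S. z i \<in> hom V (tens V X A) (cdom V i) \<and> i \<cdot> z i = unc A B y"
    proof
      fix i assume i: "i \<in> S"
      have "i \<cdot> z i = unc A B (ihom_r V A i \<cdot> x i)" unfolding z_def using unc_r[OF xi[OF i] conjunct1[OF ps[OF i]] A] by simp
      thus "z i \<in> hom V (tens V X A) (cdom V i) \<and> i \<cdot> z i = unc A B y" using xe[OF i] unfolding z_def
        using unc_hom[OF xi[OF i] A Cs[OF i]] by simp
    qed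
    obtain w where w: "w \<in> hom V (tens V X A) P" "q \<cdot> w = unc A B y" "\<forall>i\<in>S. p i \<cdot> w = z i"
      and wu: "\<And>w'. w' \<in> hom V (tens V X A) P \<and> q \<cdot> w' = unc A B y \<and> (\<forall>i\<in>S. p i \<cdot> w' = z i) \<Longrightarrow> w' = w"
    proof -
      have "\<exists>!u. u \<in> hom V (tens V X A) P \<and> q \<cdot> u = unc A B y \<and> (\<forall>i\<in>S. p i \<cdot> u = z i)"
        by (rule univ[OF tens_obj[OF X A] unc_hom[OF y A B]]) (use zz in blast)
      thus "(\<And>w. w \<in> hom V (tens V X A) P \<Longrightarrow> q \<cdot> w = unc A B y \<Longrightarrow> \<forall>i\<in>S. p i \<cdot> w = z i \<Longrightarrow>
        (\<And>w'. w' \<in> hom V (tens V X A) P \<and> q \<cdot> w' = unc A B y \<and> (\<forall>i\<in>S. p i \<cdot> w' = z i) \<Longrightarrow> w' = w) \<Longrightarrow> thesis) \<Longrightarrow> thesis"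
        by blast
    qed
    obtain c where c: "c \<in> hom V X (ihom V A P)" "unc A P c = w" using unc_surj[OF w(1) X A P] by blast
    show "\<exists>!u. u \<in> hom V X (ihom V A P) \<and> ihom_r V A q \<cdot> u = y \<and> (\<forall>i\<in>S. ihom_r V A (p i) \<cdot> u = x i)"
    proof (rule ex1I[where a=c])
      have c1: "ihom_r V A q \<cdot> c = y"
        using unc_inj[OF comp_hom[OF c(1) ihom_r_hom[OF q A]] y A B] unc_r[OF c(1) q A] c(2) w(2) by simp
      have c2: "ihom_r V A (p i) \<cdot> c = x i" if i: "i \<in> S" for i
      proof -
        have pi: "p i \<in> hom V P (cdom V i)" using ps[OF i] by blast
        have "unc A (cdom V i) (ihom_r V A (p i) \<cdot> c) = p i \<cdot> w" using unc_r[OF c(1) pi A] c(2) by simp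
        also have "\<dots> = unc A (cdom V i) (x i)" using w(3) i unfolding z_def by simp
        finally show ?thesis using unc_inj[OF comp_hom[OF c(1) ihom_r_hom[OF pi A]] xi[OF i] A Cs[OF i]] by simp
      qed
      show "c \<in> hom V X (ihom V A P) \<and> ihom_r V A q \<cdot> c = y \<and> (\<forall>i\<in>S. ihom_r V A (p i) \<cdot> c = x i)"
        using c(1) c1 c2 by blast
    next
      fix c' assume c': "c' \<in> hom V X (ihom V A P) \<and> ihom_r V A q \<cdot> c' = y \<and> (\<forall>i\<in>S. ihom_r V A (p i) \<cdot> c' = x i)"
      have ch: "c' \<in> hom V X (ihom V A P)" using c' by blast
      have a1: "q \<cdot> unc A P c' = unc A B y" using unc_r[OF ch q A] c' by simp
      have a2: "p i \<cdot> unc A P c' = z i" if i: "i \<in> S" for i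
      proof -
        have pi: "p i \<in> hom V P (cdom V i)" using ps[OF i] by blast
        show ?thesis using unc_r[OF ch pi A] c' i unfolding z_def by simp
      qed
      have "unc A P c' = w" using wu unc_hom[OF ch A P] a1 a2 by blast
      thus "c' = c" using unc_inj[OF ch c(1) A P] c(2) by simp
    qed
  qed
qed

end

context smc begin

lemma StrMonos_VMonos: "StrMonos V \<subseteq> VMonos V"
proof
  fix m assume ms: "m \<in> StrMonos V"
  have mm: "mono V m" using ms unfolding StrMonos_def by blast
  have marr: "m \<in> arr V" using mm unfolding mono_def by blast
  have "mono V (ihom_r V A m)" if A: "A \<in> obj V" for A
    using mono_ihom_r[OF mm homI[OF marr] A] .
  thus "m \<in> VMonos V" unfolding VMonos_def using marr by blast
qed

lemma Vright_eq: assumes fwc: "finitely_well_complete V" shows "Vright V (Epis V) = StrMonos V"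
proof
  show "Vright V (Epis V) \<subseteq> StrMonos V"
  proof
    fix m assume "m \<in> Vright V (Epis V)"
    hence marr: "m \<in> arr V" and Vo: "\<And>e. e \<in> Epis V \<Longrightarrow> Vorth V e m" unfolding Vright_def by auto
    define A where "A = cdom V m"
    define B where "B = ccod V m"
    have m: "m \<in> hom V A B" using homI[OF marr] unfolding A_def B_def .
    have Ao: "A \<in> obj V" using m hom_obj1 by blast
    obtain e0 m' where e0: "e0 \<in> Epis V" and m's: "m' \<in> StrMonos V" and cd: "ccod V e0 = cdom V m'" and fm: "m = m' \<cdot> e0"
      using factorization[OF fwc marr] by blast
    have ep0: "epi V e0" using e0 unfolding Epis_def by simp
    have e0arr: "e0 \<in> arr V" using ep0 unfolding epi_def by simp
    have m'm: "mono V m'" using m's unfolding StrMonos_def by blast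
    have m'arr: "m' \<in> arr V" using m'm unfolding mono_def by blast
    define M where "M = cdom V m'"
    have e0h: "e0 \<in> hom V A M" using homI[OF e0arr] cd fm m unfolding M_def
      by (metis hom_dom homI' m'arr e0arr C2 comp_hom hom_cod)
    have m'h: "m' \<in> hom V M B" using homI[OF m'arr] fm m unfolding M_def
      by (metis hom_cod homI' m'arr e0arr cd comp_hom homI)
    obtain d where d: "d \<in> hom V M A" "d \<cdot> e0 = cid V A" "m \<cdot> d = m'"
      using Vorth_diag[OF Vo[OF e0] e0h m id_hom[OF Ao] m'h] fm m by auto
    have mono_m: "mono V m"
    proof (rule mono_homI[OF marr])
      fix g h X assume g0: "g \<in> hom V X (cdom V m)" and h0: "h \<in> hom V X (cdom V m)" and eq: "m \<cdot> g = m \<cdot> h"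
      have g: "g \<in> hom V X A" and h: "h \<in> hom V X A" using g0 h0 A_def by auto
      have "m' \<cdot> (e0 \<cdot> g) = m' \<cdot> (e0 \<cdot> h)" using eq fm assoc[OF g e0h m'h] assoc[OF h e0h m'h] by simp
      hence "e0 \<cdot> g = e0 \<cdot> h" using monoD[OF m'm] comp_hom[OF g e0h] comp_hom[OF h e0h] hom_dom[OF m'h] by metis
      hence "(d \<cdot> e0) \<cdot> g = (d \<cdot> e0) \<cdot> h" using assoc[OF g e0h d(1)] assoc[OF h e0h d(1)] by simp
      thus "g = h" using d(2) g h by simp
    qed
    have "orth V e m" if ep: "epi V e" for e
    proof -
      have earr: "e \<in> arr V" using ep unfolding epi_def by simp
      have eh: "e \<in> hom V (cdom V e) (ccod V e)" using homI[OF earr] .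
      show ?thesis
      proof (rule orthI[OF eh m mono_m])
        fix u v assume u: "u \<in> hom V (cdom V e) A" and v: "v \<in> hom V (ccod V e) B" and sq: "m \<cdot> u = v \<cdot> e"
        show "\<exists>d\<in>hom V (ccod V e) A. d \<cdot> e = u \<and> m \<cdot> d = v"
          using Vorth_diag[OF Vo eh m u v sq] ep unfolding Epis_def by simp
      qed
    qed
    thus "m \<in> StrMonos V" unfolding StrMonos_def using mono_m by blast
  qed
next
  show "StrMonos V \<subseteq> Vright V (Epis V)"
  proof
    fix m assume ms: "m \<in> StrMonos V"
    have marr: "m \<in> arr V" using ms unfolding StrMonos_def mono_def by blast
    have "Vorth V e m" if "e \<in> Epis V" for e using strong_Vorth ms that unfolding Epis_def by blast
    thus "m \<in> Vright V (Epis V)" unfolding Vright_def using marr by blast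
  qed
qed

lemma Vleft_eq: assumes fwc: "finitely_well_complete V" shows "Vleft V (StrMonos V) = Epis V"
proof
  show "Vleft V (StrMonos V) \<subseteq> Epis V"
  proof
    fix e assume "e \<in> Vleft V (StrMonos V)"
    hence earr: "e \<in> arr V" and Vo: "\<And>m. m \<in> StrMonos V \<Longrightarrow> Vorth V e m" unfolding Vleft_def by auto
    define A1 where "A1 = cdom V e"
    define A2 where "A2 = ccod V e"
    have e: "e \<in> hom V A1 A2" using homI[OF earr] unfolding A1_def A2_def .
    have A: "A1 \<in> obj V" "A2 \<in> obj V" using e hom_obj1 hom_obj2 by blast+
    obtain e' m where e': "e' \<in> Epis V" and ms: "m \<in> StrMonos V" and cd: "ccod V e' = cdom V m" and fm: "e = m \<cdot> e'"
      using factorization[OF fwc earr] by blast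
    have ep': "epi V e'" using e' unfolding Epis_def by simp
    have e'arr: "e' \<in> arr V" using ep' unfolding epi_def by simp
    have mm: "mono V m" using ms unfolding StrMonos_def by blast
    have marr: "m \<in> arr V" using mm unfolding mono_def by blast
    define M where "M = cdom V m"
    have cdc: "cdom V (m \<cdot> e') = cdom V e'" "ccod V (m \<cdot> e') = ccod V m"
      using comp_hom[OF homI[OF e'arr] homI'[OF marr cd[symmetric] refl]] hom_dom hom_cod by blast+
    have e'h: "e' \<in> hom V A1 M" using homI'[OF e'arr] cd cdc fm unfolding A1_def M_def by simp
    have mh: "m \<in> hom V M A2" using homI'[OF marr] cdc fm unfolding A2_def M_def by simp
    obtain d where d: "d \<in> hom V A2 M" "d \<cdot> e = e'" "m \<cdot> d = cid V A2"
      using Vorth_diag[OF Vo[OF ms] e mh e'h id_hom[OF A(2)]] fm comp_id_l[OF e] by auto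
    have "epi V e"
    proof (rule epi_homI[OF earr])
      fix g h Y assume g0: "g \<in> hom V (ccod V e) Y" and h0: "h \<in> hom V (ccod V e) Y" and eq: "g \<cdot> e = h \<cdot> e"
      have g: "g \<in> hom V A2 Y" and h: "h \<in> hom V A2 Y" using g0 h0 A2_def by auto
      have "(g \<cdot> m) \<cdot> e' = (h \<cdot> m) \<cdot> e'" using eq fm assoc[OF e'h mh g] assoc[OF e'h mh h] by simp
      hence gm: "g \<cdot> m = h \<cdot> m" using epiD[OF ep'] comp_hom[OF mh g] comp_hom[OF mh h] hom_cod[OF e'h] by metis
      have "g = (g \<cdot> m) \<cdot> d" using assoc[OF d(1) mh g] d(3) g by simp
      also have "\<dots> = (h \<cdot> m) \<cdot> d" using gm by simp
      also have "\<dots> = h" using assoc[OF d(1) mh h] d(3) h by simp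
      finally show "g = h" .
    qed
    thus "e \<in> Epis V" unfolding Epis_def by simp
  qed
next
  show "Epis V \<subseteq> Vleft V (StrMonos V)"
  proof
    fix e assume es: "e \<in> Epis V"
    have earr: "e \<in> arr V" using es unfolding Epis_def epi_def by blast
    have "Vorth V e m" if "m \<in> StrMonos V" for m using strong_Vorth es that unfolding Epis_def by blast
    thus "e \<in> Vleft V (StrMonos V)" unfolding Vleft_def using earr by blast
  qed
qed

lemma main: assumes fwc: "finitely_well_complete V"
  shows "Vfinitely_well_complete V \<and>
         VEpis V = Epis V \<and> VStrMonos V = StrMonos V \<and>
         V_factorization_system V (Epis V) (StrMonos V) \<and>
         V_proper V (Epis V) (StrMonos V)"
proof -
  have VS: "VStrMonos V = StrMonos V"
    unfolding VStrMonos_def VEpis_eq Vright_eq[OF fwc] using StrMonos_VMonos by blast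
  have fs: "V_factorization_system V (Epis V) (StrMonos V)"
    unfolding V_factorization_system_def using Vright_eq[OF fwc] Vleft_eq[OF fwc] factorization[OF fwc] by blast
  have pr: "V_proper V (Epis V) (StrMonos V)"
    unfolding V_proper_def VEpis_eq using StrMonos_VMonos by blast
  have fl: "has_finite_limits V" using fwc unfolding finitely_well_complete_def by (elim conjE)
  have fVl: "has_finite_Vlimits V" unfolding has_finite_Vlimits_def
  proof (intro allI impI)
    fix J :: "(nat,nat) cat" and Do Da assume JF: "finite_shape J \<and> is_functor J V Do Da"
    then obtain L l where lim: "is_limit J V Do Da L l" using fl unfolding has_finite_limits_def by blast
    have J: "category J" using JF unfolding finite_shape_def by blast
    have "is_Vlimit J V Do Da L l" unfolding is_Vlimit_def using lim lim_pres[OF J conjunct2[OF JF] lim] by blast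
    thus "\<exists>L l. is_Vlimit J V Do Da L l" by blast
  qed
  have wp0: "\<forall>S B. B \<in> obj V \<and> S \<subseteq> StrMonos V \<and> (\<forall>s\<in>S. ccod V s = B) \<longrightarrow>
        (\<exists>P q p. wide_pullback V S (\<lambda>s. s) B P q p \<and> q \<in> StrMonos V)"
    using fwc unfolding finitely_well_complete_def by (elim conjE)
  have fVw: "\<forall>S B. B \<in> obj V \<and> S \<subseteq> VStrMonos V \<and> (\<forall>s\<in>S. ccod V s = B) \<longrightarrow>
        (\<exists>P q p. is_Vwide_pullback V S (\<lambda>s. s) B P q p \<and> q \<in> VStrMonos V)"
  proof (intro allI impI)
    fix S B assume h: "B \<in> obj V \<and> S \<subseteq> VStrMonos V \<and> (\<forall>s\<in>S. ccod V s = B)"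
    from wp0[rule_format, OF h[unfolded VS]] obtain P q p where W: "wide_pullback V S (\<lambda>s. s) B P q p"
      and qs: "q \<in> StrMonos V" by (elim exE conjE)
    have "is_Vwide_pullback V S (\<lambda>s. s) B P q p" unfolding is_Vwide_pullback_def
      using W wp_pres[OF W] by blast
    thus "\<exists>P q p. is_Vwide_pullback V S (\<lambda>s. s) B P q p \<and> q \<in> VStrMonos V" using qs VS by blast
  qed
  have "Vfinitely_well_complete V" unfolding Vfinitely_well_complete_def using fVl fVw by (intro conjI)
  thus ?thesis using VEpis_eq VS fs pr by blast
qed

end

theorem proposition7p10:
  fixes V :: "('o,'m) smcc"
  assumes "symmetric_monoidal_closed V"
    and "finitely_well_complete V"
  shows "Vfinitely_well_complete V \<and>
         VEpis V = Epis V \<and> VStrMonos V = StrMonos V \<and>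
         V_factorization_system V (Epis V) (StrMonos V) \<and>
         V_proper V (Epis V) (StrMonos V)"
proof -
  interpret smc V by (rule smc.intro) (rule assms(1))
  show ?thesis using main[OF assms(2)] .
qed

end
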